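(* Let $b>0$, $N\ge1$, $R>0$ and vectors $\Phi_0,\Psi_0,\Psi_b\in\mathbb{R}^N$ be given, and let $$G_1=G_1(R,\Phi_0,\Psi_0,\Psi_b)=\big\{Q=(q_0,\dots,q_{N-1})^T\in H^2(0,b):\ \|Q\|_{H^2(0,b)}<R,\ Q(0)=\Phi_0,\ Q'(0)=\Psi_0,\ Q'(b)=\Psi_b\big\}.$$ For $\lambda>1$ let $\varphi_\lambda(x)=e^{-\lambda x}$ and $$\overline{J}_\lambda(Q)=\int_0^b\big|Q''+F(Q')\big|^2\varphi_\lambda^2(x)\,dx .$$ Then there exists a sufficiently large number $\lambda_2=\lambda_2(G_1,F)>1$, depending only on $G_1$ and $F$, such that for all $\lambda\ge\lambda_2$ the functional $\overline{J}_\lambda$ is strictly convex on $G_1$, i.e., there exists a constant $C_3=C_3(G_1,F)>0$ depending only on $G_1$ and $F$ such that for all $Q_1,Q_2\in G_1$ $$\overline{J}_\lambda(Q_2)-\overline{J}_\lambda(Q_1)-\overline{J}'_\lambda(Q_1)(Q_2-Q_1)\ge C_3e^{-2\lambda b}\|Q_2-Q_1\|^2_{H^2(0,b)},$$ where $\overline{J}'_\lambda(Q_1)$ is the Fréchet derivative of $\overline{J}_\lambda$ at $Q_1$.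
   Context: For a vector function $Q=(q_0,\dots,q_{N-1})$, $\|Q\|_{H^2(0,b)}=(\sum_n\|q_n\|^2_{H^2(0,b)})^{1/2}$ and $|\cdot|$ is the Euclidean norm in $\mathbb{R}^N$. Nonlinearity: fix $\underline{s}>0$; let $L_n(s)=e^{-s/2}\sum_{k=0}^n(-1)^k\binom{n}{k}\frac{s^k}{k!}$ (Laguerre functions) and $f_n(s)=L_n(s-\underline{s})$ for $s>\underline{s}$. For $k,m,n\in\{0,\dots,N-1\}$, $$F_{kmn}=\int_{\underline{s}}^\infty 2sf_k(s)\Big(\int_s^\infty f_m(\tau)d\tau\int_s^\infty f_n(\tau)d\tau\Big)ds-\int_{\underline{s}}^\infty 2s^2f_k(s)f_m(s)\Big(\int_s^\infty f_n(\tau)d\tau\Big)ds,$$ and $F=(F_0,\dots,F_{N-1}):\mathbb{R}^N\to\mathbb{R}^N$, $F_k(Q')=\sum_{m,n=0}^{N-1}F_{kmn}q_m'q_n'$. The Fréchet derivative is taken with respect to perturbations $h\in H^2(0,b)$ with $h(0)=h'(0)=h'(b)=0$. *)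

theory Defs
  imports "HOL-Analysis.Analysis"
begin

definition laguerre :: "nat \<Rightarrow> real \<Rightarrow> real" where
  "laguerre n s = exp (- s / 2) * (\<Sum>k\<le>n. (-1) ^ k * real (n choose k) * s ^ k / fact k)"

definition fL :: "real \<Rightarrow> nat \<Rightarrow> real \<Rightarrow> real" where
  "fL sl n s = laguerre n (s - sl)"

definition tailL :: "real \<Rightarrow> nat \<Rightarrow> real \<Rightarrow> real" where
  "tailL sl n s = (LBINT t:{s..}. fL sl n t)"

definition Fcoef :: "real \<Rightarrow> nat \<Rightarrow> nat \<Rightarrow> nat \<Rightarrow> real" where
  "Fcoef sl k m n =
     (LBINT s:{sl<..}. 2 * s * fL sl k s * (tailL sl m s * tailL sl n s))
   - (LBINT s:{sl<..}. 2 * s ^ 2 * fL sl k s * fL sl m s * tailL sl n s)"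

definition Fnl :: "real \<Rightarrow> nat \<Rightarrow> (nat \<Rightarrow> real) \<Rightarrow> nat \<Rightarrow> real" where
  "Fnl sl N p k = (\<Sum>m<N. \<Sum>n<N. Fcoef sl k m n * p m * p n)"

text \<open>Scalar functions on [0,b] are represented by functions real => real that vanish
  outside [0,b] (continuous representative on [0,b]). The first derivative is the
  derivative within [0,b]; the second derivative is any L^2 function whose indefinite
  integral is the first derivative (unique a.e.).\<close>

definition d1 :: "real \<Rightarrow> (real \<Rightarrow> real) \<Rightarrow> real \<Rightarrow> real" where
  "d1 b q x = vector_derivative q (at x within {0..b})"

definition is_d2 :: "real \<Rightarrow> (real \<Rightarrow> real) \<Rightarrow> (real \<Rightarrow> real) \<Rightarrow> bool" where
  "is_d2 b q g \<longleftrightarrow>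
     (\<forall>x\<in>{0..b}. (g has_integral (d1 b q x - d1 b q 0)) {0..x}) \<and>
     (\<lambda>x. (g x)\<^sup>2) integrable_on {0..b}"

definition d2 :: "real \<Rightarrow> (real \<Rightarrow> real) \<Rightarrow> real \<Rightarrow> real" where
  "d2 b q = (SOME g. is_d2 b q g)"

definition H2 :: "real \<Rightarrow> (real \<Rightarrow> real) \<Rightarrow> bool" where
  "H2 b q \<longleftrightarrow>
     (\<forall>x. x \<notin> {0..b} \<longrightarrow> q x = 0) \<and>
     (\<forall>x\<in>{0..b}. (q has_vector_derivative d1 b q x) (at x within {0..b})) \<and>
     (\<exists>g. is_d2 b q g)"

definition H2vec :: "real \<Rightarrow> nat \<Rightarrow> (nat \<Rightarrow> real \<Rightarrow> real) \<Rightarrow> bool" where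
  "H2vec b N Q \<longleftrightarrow> (\<forall>n<N. H2 b (Q n)) \<and> (\<forall>n\<ge>N. Q n = (\<lambda>x. 0))"

definition H2norm :: "real \<Rightarrow> nat \<Rightarrow> (nat \<Rightarrow> real \<Rightarrow> real) \<Rightarrow> real" where
  "H2norm b N Q =
     sqrt (\<Sum>n<N. integral {0..b} (\<lambda>x. (Q n x)\<^sup>2 + (d1 b (Q n) x)\<^sup>2 + (d2 b (Q n) x)\<^sup>2))"

definition G1 :: "real \<Rightarrow> nat \<Rightarrow> real \<Rightarrow> (nat \<Rightarrow> real) \<Rightarrow> (nat \<Rightarrow> real) \<Rightarrow> (nat \<Rightarrow> real)
                   \<Rightarrow> (nat \<Rightarrow> real \<Rightarrow> real) set" where
  "G1 b N R Phi0 Psi0 Psib =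
     {Q. H2vec b N Q \<and> H2norm b N Q < R \<and>
         (\<forall>n<N. Q n 0 = Phi0 n \<and> d1 b (Q n) 0 = Psi0 n \<and> d1 b (Q n) b = Psib n)}"

definition H0vec :: "real \<Rightarrow> nat \<Rightarrow> (nat \<Rightarrow> real \<Rightarrow> real) \<Rightarrow> bool" where
  "H0vec b N h \<longleftrightarrow> H2vec b N h \<and>
     (\<forall>n<N. h n 0 = 0 \<and> d1 b (h n) 0 = 0 \<and> d1 b (h n) b = 0)"

definition Jbar :: "real \<Rightarrow> real \<Rightarrow> nat \<Rightarrow> real \<Rightarrow> (nat \<Rightarrow> real \<Rightarrow> real) \<Rightarrow> real" where
  "Jbar sl b N lam Q =
     integral {0..b} (\<lambda>x.
        (\<Sum>k<N. (d2 b (Q k) x + Fnl sl N (\<lambda>m. d1 b (Q m) x) k)\<^sup>2) * (exp (- lam * x))\<^sup>2)"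

definition vadd :: "(nat \<Rightarrow> real \<Rightarrow> real) \<Rightarrow> (nat \<Rightarrow> real \<Rightarrow> real) \<Rightarrow> nat \<Rightarrow> real \<Rightarrow> real" where
  "vadd P Q = (\<lambda>n x. P n x + Q n x)"

definition vdiff :: "(nat \<Rightarrow> real \<Rightarrow> real) \<Rightarrow> (nat \<Rightarrow> real \<Rightarrow> real) \<Rightarrow> nat \<Rightarrow> real \<Rightarrow> real" where
  "vdiff P Q = (\<lambda>n x. P n x - Q n x)"

definition frechet_H0 :: "real \<Rightarrow> nat \<Rightarrow> ((nat \<Rightarrow> real \<Rightarrow> real) \<Rightarrow> real)
      \<Rightarrow> (nat \<Rightarrow> real \<Rightarrow> real) \<Rightarrow> ((nat \<Rightarrow> real \<Rightarrow> real) \<Rightarrow> real) \<Rightarrow> bool" where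
  "frechet_H0 b N J Q L \<longleftrightarrow>
     (\<forall>h1 h2 a c. H0vec b N h1 \<longrightarrow> H0vec b N h2 \<longrightarrow>
        L (\<lambda>n x. a * h1 n x + c * h2 n x) = a * L h1 + c * L h2) \<and>
     (\<exists>K. \<forall>h. H0vec b N h \<longrightarrow> \<bar>L h\<bar> \<le> K * H2norm b N h) \<and>
     (\<forall>\<epsilon>>0. \<exists>\<delta>>0. \<forall>h. H0vec b N h \<longrightarrow> H2norm b N h < \<delta> \<longrightarrow>
        \<bar>J (vadd Q h) - J Q - L h\<bar> \<le> \<epsilon> * H2norm b N h)"

end

theory Submission
  imports Defs
begin


lemma intg_cmul: "f integrable_on S \<Longrightarrow> (\<lambda>x. c * f x) integrable_on S" for f :: "real \<Rightarrow> real"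
  using integrable_on_cmult_left[of f S c] by simp

definition sqi :: "real \<Rightarrow> (real \<Rightarrow> real) \<Rightarrow> bool" where
  "sqi b f \<longleftrightarrow> f \<in> borel_measurable (lebesgue_on {0..b}) \<and> (\<lambda>x. (f x)\<^sup>2) integrable_on {0..b}"

lemma sqi_prod_abs:
  assumes "sqi b f" "sqi b g"
  shows "(\<lambda>x. f x * g x) absolutely_integrable_on {0..b}"
proof (rule measurable_bounded_by_integrable_imp_absolutely_integrable)
  show "(\<lambda>x. f x * g x) \<in> borel_measurable (lebesgue_on {0..b})"
    using assms unfolding sqi_def by (intro borel_measurable_times) auto
  show "(\<lambda>x. (f x)\<^sup>2 + (g x)\<^sup>2) integrable_on {0..b}"
    using assms unfolding sqi_def by (intro integrable_add) auto
  show "norm (f x * g x) \<le> (f x)\<^sup>2 + (g x)\<^sup>2" for x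
  proof -
    have "0 \<le> (\<bar>f x\<bar> - \<bar>g x\<bar>)\<^sup>2" by simp
    then have h1: "\<bar>f x\<bar> * (\<bar>g x\<bar> * 2) \<le> f x * f x + g x * g x"
      by (simp add: power2_eq_square algebra_simps)
    have h2: "0 \<le> \<bar>f x\<bar> * \<bar>g x\<bar>" by simp
    show ?thesis unfolding real_norm_def abs_mult power2_eq_square using h1 h2 by linarith
  qed
qed auto

lemma sqi_prod: "sqi b f \<Longrightarrow> sqi b g \<Longrightarrow> (\<lambda>x. f x * g x) integrable_on {0..b}"
  using sqi_prod_abs absolutely_integrable_on_def by blast

lemma sqi_add: assumes "sqi b f" "sqi b g" shows "sqi b (\<lambda>x. f x + g x)"
proof -
  have "(\<lambda>x. (f x)\<^sup>2 + 2 * (f x * g x) + (g x)\<^sup>2) integrable_on {0..b}"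
    using assms sqi_prod[OF assms] unfolding sqi_def
    by (intro integrable_add integrable_cmul) auto
  then show ?thesis using assms unfolding sqi_def by (auto simp: power2_sum algebra_simps)
qed

lemma sqi_cmul: assumes "sqi b f" shows "sqi b (\<lambda>x. c * f x)"
  using assms integrable_cmul[of "\<lambda>x. (f x)\<^sup>2" "{0..b}" "c\<^sup>2"]
  unfolding sqi_def by (auto simp: power_mult_distrib)

lemma sqi_neg: assumes "sqi b f" shows "sqi b (\<lambda>x. - f x)"
  using sqi_cmul[OF assms, of "-1"] by simp

lemma sqi_diff: assumes "sqi b f" "sqi b g" shows "sqi b (\<lambda>x. f x - g x)"
  using sqi_add[OF assms(1) sqi_neg[OF assms(2)]] by simp

lemma sqi_sum: "(\<And>i. i \<in> I \<Longrightarrow> sqi b (f i)) \<Longrightarrow> sqi b (\<lambda>x. \<Sum>i\<in>I. f i x)"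
proof (induction I rule: infinite_finite_induct)
  case (infinite A) then show ?case by (auto simp: sqi_def intro: integrable_0)
next
  case empty then show ?case by (auto simp: sqi_def intro: integrable_0)
next
  case (insert a A) then show ?case by (simp add: sqi_add)
qed

lemma sqi_cont: assumes "continuous_on {0..b} f" shows "sqi b f"
  unfolding sqi_def
proof
  show "f \<in> borel_measurable (lebesgue_on {0..b})"
    by (simp add: assms continuous_imp_measurable_on_sets_lebesgue)
  show "(\<lambda>x. (f x)\<^sup>2) integrable_on {0..b}"
    by (intro integrable_continuous_interval continuous_intros assms)
qed

lemma sqi_mult_bounded:
  assumes "sqi b f" "g \<in> borel_measurable (lebesgue_on {0..b})" "\<And>x. x \<in> {0..b} \<Longrightarrow> \<bar>g x\<bar> \<le> M"
  shows "sqi b (\<lambda>x. g x * f x)"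
  unfolding sqi_def
proof
  show "(\<lambda>x. g x * f x) \<in> borel_measurable (lebesgue_on {0..b})"
    using assms unfolding sqi_def by (intro borel_measurable_times) auto
  show "(\<lambda>x. (g x * f x)\<^sup>2) integrable_on {0..b}"
  proof (rule measurable_bounded_by_integrable_imp_integrable)
    show "(\<lambda>x. (g x * f x)\<^sup>2) \<in> borel_measurable (lebesgue_on {0..b})"
      using assms unfolding sqi_def by (intro borel_measurable_power borel_measurable_times) auto
    show "(\<lambda>x. M\<^sup>2 * (f x)\<^sup>2) integrable_on {0..b}"
      using assms unfolding sqi_def by (intro intg_cmul) auto
    show "norm ((g x * f x)\<^sup>2) \<le> M\<^sup>2 * (f x)\<^sup>2" if "x \<in> {0..b}" for x
    proof -
      have "\<bar>g x\<bar>\<^sup>2 \<le> M\<^sup>2" using power_mono[OF assms(3)[OF that] abs_ge_zero, of 2] by simp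
      then show ?thesis by (simp add: power_mult_distrib mult_right_mono)
    qed
  qed auto
qed

lemma sqi_mult_cont:
  assumes "sqi b f" "continuous_on {0..b} g"
  shows "sqi b (\<lambda>x. g x * f x)"
proof -
  have "bounded (g ` {0..b})"
    using compact_imp_bounded[OF compact_continuous_image[OF assms(2) compact_Icc]] .
  then obtain M where "\<forall>y\<in>g ` {0..b}. norm y \<le> M"
    unfolding bounded_iff by blast
  then have "\<And>x. x \<in> {0..b} \<Longrightarrow> \<bar>g x\<bar> \<le> M" by auto
  then show ?thesis
    by (intro sqi_mult_bounded[OF assms(1)]) (auto simp: assms continuous_imp_measurable_on_sets_lebesgue)
qed



lemma d2_is: "H2 b q \<Longrightarrow> is_d2 b q (d2 b q)"
  unfolding H2_def d2_def using someI[of "is_d2 b q"] by blast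

lemma is_d2_int: "is_d2 b q g \<Longrightarrow> 0 \<le> b \<Longrightarrow> g integrable_on {0..b}"
  unfolding is_d2_def by auto

lemma is_d2_sqi: "is_d2 b q g \<Longrightarrow> 0 \<le> b \<Longrightarrow> sqi b g"
  unfolding sqi_def using is_d2_int[of b q g] integrable_imp_measurable
  unfolding is_d2_def by blast

lemma d1_repr: "is_d2 b q g \<Longrightarrow> x \<in> {0..b} \<Longrightarrow> d1 b q x = d1 b q 0 + integral {0..x} g"
proof -
  assume "is_d2 b q g" "x \<in> {0..b}"
  then have "(g has_integral (d1 b q x - d1 b q 0)) {0..x}" unfolding is_d2_def by blast
  then have "integral {0..x} g = d1 b q x - d1 b q 0" by (rule integral_unique)
  then show ?thesis by simp
qed

lemma d1_cont: assumes "is_d2 b q g" "0 \<le> b" shows "continuous_on {0..b} (d1 b q)"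
proof -
  have "continuous_on {0..b} (\<lambda>x. integral {0..x} g)"
    by (rule indefinite_integral_continuous_1[OF is_d2_int[OF assms]])
  then have "continuous_on {0..b} (\<lambda>x. d1 b q 0 + integral {0..x} g)"
    by (rule continuous_on_add[OF continuous_on_const])
  then show ?thesis
  proof (rule continuous_on_eq)
    fix x assume "x \<in> {0..b}"
    then show "d1 b q 0 + integral {0..x} g = d1 b q x" using d1_repr[OF assms(1), of x] by linarith
  qed
qed

lemma is_d2_unique:
  assumes g1: "is_d2 b q g1" and g2: "is_d2 b q g2" and b: "0 \<le> b"
  shows "negligible {x\<in>{0..b}. g1 x \<noteq> g2 x}"
proof -
  define f where "f = (\<lambda>x. if x \<in> {0..b} then g1 x - g2 x else 0)"
  have gi: "(\<lambda>x. g1 x - g2 x) integrable_on {0..b}"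
    using is_d2_int[OF g1 b] is_d2_int[OF g2 b] by (rule integrable_diff)
  then have fU: "f integrable_on UNIV"
    unfolding f_def Henstock_Kurzweil_Integration.integrable_restrict_UNIV .
  have fc: "\<And>a c::real. f integrable_on cbox a c"
    by (rule integrable_on_subcbox[OF fU]) simp
  have zero: "integral {0..y} (\<lambda>x. g1 x - g2 x) = 0" if "y \<in> {0..b}" for y
  proof -
    have "integral {0..y} (\<lambda>x. g1 x - g2 x) = integral {0..y} g1 - integral {0..y} g2"
      using that is_d2_int[OF g1 b] is_d2_int[OF g2 b]
      by (intro integral_diff; auto intro: integrable_on_subinterval)
    also have "\<dots> = 0" using d1_repr[OF g1 that] d1_repr[OF g2 that] by simp
    finally show ?thesis .
  qed
  obtain N where N: "negligible N"
    and Nc: "\<And>x e. \<lbrakk>x \<notin> N; 0 < e\<rbrakk> \<Longrightarrow> \<exists>d>0. \<forall>h. 0 < h \<and> h < d \<longrightarrow>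
         norm(integral (cbox x (x + h *\<^sub>R One)) f /\<^sub>R h ^ DIM(real) - f x) < e"
    using integrable_ccontinuous_explicit[OF fc] by (metis (no_types))
  have sub: "{x\<in>{0..b}. g1 x \<noteq> g2 x} \<subseteq> N \<union> {0, b}"
  proof (rule subsetI, rule ccontr)
    fix x assume x: "x \<in> {x\<in>{0..b}. g1 x \<noteq> g2 x}" and nx: "x \<notin> N \<union> {0, b}"
    then have x0: "0 < x" "x < b" by auto
    have fx: "f x = g1 x - g2 x" using x by (simp add: f_def)
    have pos: "0 < \<bar>f x\<bar>" using x fx by auto
    have xN: "x \<notin> N" using nx by simp
    obtain d where d: "d > 0"
      and dd: "\<And>h. 0 < h \<and> h < d \<Longrightarrow> norm(integral (cbox x (x + h *\<^sub>R One)) f /\<^sub>R h ^ DIM(real) - f x) < \<bar>f x\<bar>"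
      using Nc[OF xN pos] by blast
    define m where "m = min d (b - x)"
    define h where "h = m / 2"
    have hm: "m \<le> d" "m \<le> b - x" "0 < m" using d x0 by (auto simp: m_def)
    have h1: "0 < h" using hm unfolding h_def by linarith
    have h2: "h < d" using hm d unfolding h_def by linarith
    have h3: "x + h \<le> b" using hm unfolding h_def by linarith
    note h = h1 h2 h3
    have "integral {x..x+h} f = integral {x..x+h} (\<lambda>x. g1 x - g2 x)"
      using h x0 by (intro integral_cong) (auto simp: f_def)
    also have "\<dots> = integral {0..x+h} (\<lambda>x. g1 x - g2 x) - integral {0..x} (\<lambda>x. g1 x - g2 x)"
      using Henstock_Kurzweil_Integration.integral_combine[where a=0 and c=x and b="x+h" and f="\<lambda>x. g1 x - g2 x"] h x0
        integrable_on_subinterval[OF gi, of 0 "x+h"] by auto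
    also have "\<dots> = 0" using zero[of "x+h"] zero[of x] h x0 by auto
    finally have "integral {x..x+h} f = 0" .
    moreover have "cbox x (x + h *\<^sub>R One) = {x..x+h}" by (simp add: cbox_interval)
    ultimately have "norm(integral (cbox x (x + h *\<^sub>R One)) f /\<^sub>R h ^ DIM(real) - f x) = \<bar>f x\<bar>"
      by simp
    moreover have "norm(integral (cbox x (x + h *\<^sub>R One)) f /\<^sub>R h ^ DIM(real) - f x) < \<bar>f x\<bar>"
      using dd h1 h2 by blast
    ultimately show False by linarith
  qed
  have "negligible (N \<union> {0, b})" using N by (intro negligible_Un) auto
  from negligible_subset[OF this sub] show ?thesis .
qed

lemma is_d2_integral_eq:
  assumes "is_d2 b q g1" "is_d2 b q g2" "0 \<le> b"
  shows "integral {0..b} (\<lambda>x. E x (g1 x)) = integral {0..b} (\<lambda>x. E x (g2 x))"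
proof (rule integral_spike[OF is_d2_unique[OF assms]])
  fix x assume "x \<in> {0..b} - {x \<in> {0..b}. g1 x \<noteq> g2 x}"
  then have "g1 x = g2 x" by blast
  then show "E x (g2 x) = E x (g1 x)" by simp
qed



definition DF :: "real \<Rightarrow> nat \<Rightarrow> (nat \<Rightarrow> real) \<Rightarrow> (nat \<Rightarrow> real) \<Rightarrow> nat \<Rightarrow> real" where
  "DF sl N p v k = (\<Sum>m<N. \<Sum>n<N. Fcoef sl k m n * (p m * v n + v m * p n))"

definition Cf :: "real \<Rightarrow> nat \<Rightarrow> real" where
  "Cf sl N = (\<Sum>k<N. \<Sum>m<N. \<Sum>n<N. \<bar>Fcoef sl k m n\<bar>)"

lemma Fnl_add: "Fnl sl N (\<lambda>m. p m + v m) k = Fnl sl N p k + DF sl N p v k + Fnl sl N v k"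
  unfolding Fnl_def DF_def by (simp add: sum.distrib[symmetric] algebra_simps)

lemma DF_lin: "DF sl N p (\<lambda>m. a * v m + c * u m) k = a * DF sl N p v k + c * DF sl N p u k"
  unfolding DF_def by (simp add: sum_distrib_left sum.distrib[symmetric] algebra_simps)

lemma Fnl_cong: "(\<And>m. m < N \<Longrightarrow> p m = p' m) \<Longrightarrow> Fnl sl N p k = Fnl sl N p' k"
  unfolding Fnl_def by (intro sum.cong) auto

lemma DF_cong: "(\<And>m. m < N \<Longrightarrow> p m = p' m) \<Longrightarrow> (\<And>m. m < N \<Longrightarrow> v m = v' m) \<Longrightarrow>
   DF sl N p v k = DF sl N p' v' k"
  unfolding DF_def by (intro sum.cong) auto

lemma Cf_ge: "k < N \<Longrightarrow> (\<Sum>m<N. \<Sum>n<N. \<bar>Fcoef sl k m n\<bar>) \<le> Cf sl N"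
  unfolding Cf_def
  by (rule member_le_sum[where f="\<lambda>k. \<Sum>m<N. \<Sum>n<N. \<bar>Fcoef sl k m n\<bar>"]) (auto intro: sum_nonneg)

lemma Cf_nonneg: "0 \<le> Cf sl N"
  unfolding Cf_def by (intro sum_nonneg) auto

lemma Fnl_bound:
  assumes "k < N" "\<And>m. m < N \<Longrightarrow> \<bar>v m\<bar> \<le> V"
  shows "\<bar>Fnl sl N v k\<bar> \<le> Cf sl N * V\<^sup>2"
proof -
  have "\<bar>Fnl sl N v k\<bar> \<le> (\<Sum>m<N. \<Sum>n<N. \<bar>Fcoef sl k m n * v m * v n\<bar>)"
    unfolding Fnl_def by (rule order_trans[OF sum_abs]) (intro sum_mono sum_abs)
  also have "\<dots> \<le> (\<Sum>m<N. \<Sum>n<N. \<bar>Fcoef sl k m n\<bar> * V\<^sup>2)"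
  proof (intro sum_mono)
    fix m n assume "m \<in> {..<N}" "n \<in> {..<N}"
    then have "\<bar>v m\<bar> * \<bar>v n\<bar> \<le> V * V" using assms(2)
      by (intro mult_mono) (auto intro: order_trans[OF abs_ge_zero])
    then show "\<bar>Fcoef sl k m n * v m * v n\<bar> \<le> \<bar>Fcoef sl k m n\<bar> * V\<^sup>2"
      by (simp add: abs_mult power2_eq_square mult.assoc mult_left_mono)
  qed
  also have "\<dots> = (\<Sum>m<N. \<Sum>n<N. \<bar>Fcoef sl k m n\<bar>) * V\<^sup>2"
    by (simp add: sum_distrib_right)
  also have "\<dots> \<le> Cf sl N * V\<^sup>2"
    using Cf_ge[OF assms(1)] by (simp add: mult_right_mono)
  finally show ?thesis .
qed

lemma DF_bound:
  assumes "k < N" "\<And>m. m < N \<Longrightarrow> \<bar>v m\<bar> \<le> V" "\<And>m. m < N \<Longrightarrow> \<bar>p m\<bar> \<le> P"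
  shows "\<bar>DF sl N p v k\<bar> \<le> 2 * Cf sl N * P * V"
proof -
  have "\<bar>DF sl N p v k\<bar> \<le> (\<Sum>m<N. \<Sum>n<N. \<bar>Fcoef sl k m n * (p m * v n + v m * p n)\<bar>)"
    unfolding DF_def by (rule order_trans[OF sum_abs]) (intro sum_mono sum_abs)
  also have "\<dots> \<le> (\<Sum>m<N. \<Sum>n<N. \<bar>Fcoef sl k m n\<bar> * (2 * P * V))"
  proof (intro sum_mono)
    fix m n assume "m \<in> {..<N}" "n \<in> {..<N}"
    then have a: "\<bar>p m\<bar> * \<bar>v n\<bar> \<le> P * V" "\<bar>v m\<bar> * \<bar>p n\<bar> \<le> V * P" using assms(2,3)
      by (auto intro!: mult_mono intro: order_trans[OF abs_ge_zero])
    have t: "\<bar>p m * v n + v m * p n\<bar> \<le> \<bar>p m\<bar> * \<bar>v n\<bar> + \<bar>v m\<bar> * \<bar>p n\<bar>"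
      using abs_triangle_ineq[of "p m * v n" "v m * p n"] by (simp add: abs_mult)
    have "V * P = P * V" by simp
    then have "\<bar>p m * v n + v m * p n\<bar> \<le> 2 * P * V" using a t by linarith
    then show "\<bar>Fcoef sl k m n * (p m * v n + v m * p n)\<bar> \<le> \<bar>Fcoef sl k m n\<bar> * (2 * P * V)"
      by (simp add: abs_mult mult_left_mono)
  qed
  also have "\<dots> = (\<Sum>m<N. \<Sum>n<N. \<bar>Fcoef sl k m n\<bar>) * (2 * P * V)"
    by (simp add: sum_distrib_right)
  also have "\<dots> \<le> Cf sl N * (2 * P * V)"
    using Cf_ge[OF assms(1)] assms
    by (intro mult_right_mono) (auto intro: order_trans[OF abs_ge_zero] simp: zero_le_mult_iff)
  finally show ?thesis by simp
qed

lemma Fnl_cont: "(\<And>m. m < N \<Longrightarrow> continuous_on S (\<lambda>x. p x m)) \<Longrightarrow> continuous_on S (\<lambda>x. Fnl sl N (p x) k)"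
  unfolding Fnl_def by (intro continuous_intros) auto

lemma DF_cont: "(\<And>m. m < N \<Longrightarrow> continuous_on S (\<lambda>x. p x m)) \<Longrightarrow> (\<And>m. m < N \<Longrightarrow> continuous_on S (\<lambda>x. v x m))
   \<Longrightarrow> continuous_on S (\<lambda>x. DF sl N (p x) (v x) k)"
  unfolding DF_def by (intro continuous_intros) auto

lemma d1_lin:
  assumes "H2 b q1" "H2 b q2" "0 < b" "x \<in> {0..b}"
  shows "((\<lambda>x. a * q1 x + c * q2 x) has_vector_derivative (a * d1 b q1 x + c * d1 b q2 x)) (at x within {0..b})"
    and "d1 b (\<lambda>x. a * q1 x + c * q2 x) x = a * d1 b q1 x + c * d1 b q2 x"
proof -
  have "(q1 has_vector_derivative d1 b q1 x) (at x within {0..b})"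
       "(q2 has_vector_derivative d1 b q2 x) (at x within {0..b})"
    using assms unfolding H2_def by auto
  then show *: "((\<lambda>x. a * q1 x + c * q2 x) has_vector_derivative (a * d1 b q1 x + c * d1 b q2 x)) (at x within {0..b})"
    by (auto intro!: derivative_eq_intros)
  show "d1 b (\<lambda>x. a * q1 x + c * q2 x) x = a * d1 b q1 x + c * d1 b q2 x"
    unfolding d1_def[of b "\<lambda>x. a * q1 x + c * q2 x"]
    by (rule vector_derivative_within_closed_interval[OF assms(3,4) *])
qed

lemma H2_lin:
  assumes "H2 b q1" "H2 b q2" "0 < b"
  shows "H2 b (\<lambda>x. a * q1 x + c * q2 x)"
    and "is_d2 b (\<lambda>x. a * q1 x + c * q2 x) (\<lambda>x. a * d2 b q1 x + c * d2 b q2 x)"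
proof -
  have g1: "is_d2 b q1 (d2 b q1)" and g2: "is_d2 b q2 (d2 b q2)" using assms d2_is by auto
  show *: "is_d2 b (\<lambda>x. a * q1 x + c * q2 x) (\<lambda>x. a * d2 b q1 x + c * d2 b q2 x)"
    unfolding is_d2_def
  proof (intro conjI ballI)
    fix x assume x: "x \<in> {0..b}"
    have "(d2 b q1 has_integral (d1 b q1 x - d1 b q1 0)) {0..x}"
         "(d2 b q2 has_integral (d1 b q2 x - d1 b q2 0)) {0..x}"
      using g1 g2 x unfolding is_d2_def by auto
    then have "((\<lambda>x. a * d2 b q1 x + c * d2 b q2 x) has_integral
        (a * (d1 b q1 x - d1 b q1 0) + c * (d1 b q2 x - d1 b q2 0))) {0..x}"
      by (intro has_integral_add has_integral_mult_right)
    then show "((\<lambda>x. a * d2 b q1 x + c * d2 b q2 x) has_integral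
        (d1 b (\<lambda>x. a * q1 x + c * q2 x) x - d1 b (\<lambda>x. a * q1 x + c * q2 x) 0)) {0..x}"
      using d1_lin(2)[OF assms, of x a c] d1_lin(2)[OF assms, of 0 a c] x assms(3)
      by (simp add: algebra_simps)
  next
    have "sqi b (\<lambda>x. a * d2 b q1 x + c * d2 b q2 x)"
      using is_d2_sqi[OF g1] is_d2_sqi[OF g2] assms(3)
      by (intro sqi_add sqi_cmul) auto
    then show "(\<lambda>x. (a * d2 b q1 x + c * d2 b q2 x)\<^sup>2) integrable_on {0..b}"
      unfolding sqi_def by auto
  qed
  show "H2 b (\<lambda>x. a * q1 x + c * q2 x)"
    unfolding H2_def
  proof (intro conjI allI impI ballI)
    fix x :: real assume "x \<notin> {0..b}" then show "a * q1 x + c * q2 x = 0"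
      using assms unfolding H2_def by auto
  next
    fix x assume x: "x \<in> {0..b}"
    show "((\<lambda>x. a * q1 x + c * q2 x) has_vector_derivative d1 b (\<lambda>x. a * q1 x + c * q2 x) x) (at x within {0..b})"
      using d1_lin[OF assms x] by simp
  next
    show "\<exists>g. is_d2 b (\<lambda>x. a * q1 x + c * q2 x) g" using * by blast
  qed
qed



definition wt :: "real \<Rightarrow> real \<Rightarrow> real" where "wt lam x = (exp (- lam * x))\<^sup>2"

definition Pv :: "real \<Rightarrow> (nat \<Rightarrow> real \<Rightarrow> real) \<Rightarrow> real \<Rightarrow> nat \<Rightarrow> real" where
  "Pv b Q x = (\<lambda>m. d1 b (Q m) x)"

definition Ac :: "real \<Rightarrow> real \<Rightarrow> nat \<Rightarrow> (nat \<Rightarrow> real \<Rightarrow> real) \<Rightarrow> nat \<Rightarrow> real \<Rightarrow> real" where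
  "Ac sl b N Q k x = d2 b (Q k) x + Fnl sl N (Pv b Q x) k"

definition Lm :: "real \<Rightarrow> real \<Rightarrow> nat \<Rightarrow> real \<Rightarrow> (nat \<Rightarrow> real \<Rightarrow> real) \<Rightarrow> (nat \<Rightarrow> real \<Rightarrow> real) \<Rightarrow> real" where
  "Lm sl b N lam Q h = integral {0..b} (\<lambda>x.
     (\<Sum>k<N. 2 * Ac sl b N Q k x * (d2 b (h k) x + DF sl N (Pv b Q x) (Pv b h x) k)) * wt lam x)"

definition Rm :: "real \<Rightarrow> real \<Rightarrow> nat \<Rightarrow> real \<Rightarrow> (nat \<Rightarrow> real \<Rightarrow> real) \<Rightarrow> (nat \<Rightarrow> real \<Rightarrow> real) \<Rightarrow> real" where
  "Rm sl b N lam Q h =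
     integral {0..b} (\<lambda>x. (\<Sum>k<N. (d2 b (h k) x + DF sl N (Pv b Q x) (Pv b h x) k + Fnl sl N (Pv b h x) k)\<^sup>2) * wt lam x)
   + integral {0..b} (\<lambda>x. (\<Sum>k<N. 2 * Ac sl b N Q k x * Fnl sl N (Pv b h x) k) * wt lam x)"

lemma Jbar_alt: "Jbar sl b N lam Q = integral {0..b} (\<lambda>x. (\<Sum>k<N. (Ac sl b N Q k x)\<^sup>2) * wt lam x)"
  unfolding Jbar_def Ac_def Pv_def wt_def ..

lemma wt_cont: "continuous_on S (wt lam)"
  unfolding wt_def by (intro continuous_intros)

lemma wt_pos: "0 < wt lam x" unfolding wt_def by simp

lemma H2vec_facts:
  assumes "H2vec b N Q" "0 < b" "m < N"
  shows "H2 b (Q m)" "is_d2 b (Q m) (d2 b (Q m))" "sqi b (d2 b (Q m))"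
    "continuous_on {0..b} (d1 b (Q m))" "continuous_on {0..b} (\<lambda>x. Pv b Q x m)"
proof -
  show h: "H2 b (Q m)" using assms unfolding H2vec_def by auto
  show i: "is_d2 b (Q m) (d2 b (Q m))" using d2_is[OF h] .
  show "sqi b (d2 b (Q m))" using is_d2_sqi[OF i] assms by auto
  show c: "continuous_on {0..b} (d1 b (Q m))" using d1_cont[OF i] assms by auto
  then show "continuous_on {0..b} (\<lambda>x. Pv b Q x m)" unfolding Pv_def by simp
qed

lemma sqi_Fnl: "H2vec b N Q \<Longrightarrow> 0 < b \<Longrightarrow> sqi b (\<lambda>x. Fnl sl N (Pv b Q x) k)"
  by (intro sqi_cont Fnl_cont H2vec_facts(5)) auto

lemma sqi_DF: "H2vec b N Q \<Longrightarrow> H2vec b N h \<Longrightarrow> 0 < b \<Longrightarrow> sqi b (\<lambda>x. DF sl N (Pv b Q x) (Pv b h x) k)"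
  by (intro sqi_cont DF_cont H2vec_facts(5)) auto

lemma sqi_Ac: "H2vec b N Q \<Longrightarrow> 0 < b \<Longrightarrow> k < N \<Longrightarrow> sqi b (Ac sl b N Q k)"
  unfolding Ac_def by (intro sqi_add sqi_Fnl H2vec_facts(3)) auto

lemma int_sumw:
  fixes N :: nat
  assumes "\<And>k. k < N \<Longrightarrow> sqi b (f k)" "\<And>k. k < N \<Longrightarrow> sqi b (g k)"
  shows "(\<lambda>x. (\<Sum>k<N. f k x * g k x) * wt lam x) integrable_on {0..b}"
proof -
  have "(\<lambda>x. \<Sum>k<N. f k x * (wt lam x * g k x)) integrable_on {0..b}"
    using assms by (intro integrable_sum finite_lessThan sqi_prod sqi_mult_cont wt_cont) auto
  moreover have "(\<lambda>x. \<Sum>k<N. f k x * (wt lam x * g k x)) = (\<lambda>x. (\<Sum>k<N. f k x * g k x) * wt lam x)"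
    by (simp add: sum_distrib_right sum_distrib_left mult_ac)
  ultimately show ?thesis by simp
qed

lemma int_sumw_sq:
  fixes N :: nat
  assumes "\<And>k. k < N \<Longrightarrow> sqi b (f k)"
  shows "(\<lambda>x. (\<Sum>k<N. (f k x)\<^sup>2) * wt lam x) integrable_on {0..b}"
  using int_sumw[of N b f f lam] assms by (simp add: power2_eq_square)

lemma H2_add:
  assumes "H2 b q1" "H2 b q2" "0 < b"
  shows "H2 b (\<lambda>x. q1 x + q2 x)" "is_d2 b (\<lambda>x. q1 x + q2 x) (\<lambda>x. d2 b q1 x + d2 b q2 x)"
    "x \<in> {0..b} \<Longrightarrow> d1 b (\<lambda>x. q1 x + q2 x) x = d1 b q1 x + d1 b q2 x"
  using H2_lin[OF assms, of 1 1] d1_lin(2)[OF assms, of x 1 1] by auto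

lemma pointwise_id:
  fixes N :: nat
  shows "(\<Sum>k<N. (g k + H k + Fnl sl N (\<lambda>m. p m + v m) k)\<^sup>2) * w
   - (\<Sum>k<N. (g k + Fnl sl N p k)\<^sup>2) * w
   - (\<Sum>k<N. 2 * (g k + Fnl sl N p k) * (H k + DF sl N p v k)) * w
   = (\<Sum>k<N. (H k + DF sl N p v k + Fnl sl N v k)\<^sup>2) * w
   + (\<Sum>k<N. 2 * (g k + Fnl sl N p k) * Fnl sl N v k) * w"
proof -
  have "\<And>k. (g k + H k + Fnl sl N (\<lambda>m. p m + v m) k)\<^sup>2 - (g k + Fnl sl N p k)\<^sup>2
      - 2 * (g k + Fnl sl N p k) * (H k + DF sl N p v k)
      = (H k + DF sl N p v k + Fnl sl N v k)\<^sup>2 + 2 * (g k + Fnl sl N p k) * Fnl sl N v k"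
    unfolding Fnl_add by (simp add: power2_eq_square algebra_simps)
  then have "(\<Sum>k<N. (g k + H k + Fnl sl N (\<lambda>m. p m + v m) k)\<^sup>2) - (\<Sum>k<N. (g k + Fnl sl N p k)\<^sup>2)
      - (\<Sum>k<N. 2 * (g k + Fnl sl N p k) * (H k + DF sl N p v k))
      = (\<Sum>k<N. (H k + DF sl N p v k + Fnl sl N v k)\<^sup>2) + (\<Sum>k<N. 2 * (g k + Fnl sl N p k) * Fnl sl N v k)"
    by (simp add: sum_subtractf[symmetric] sum.distrib[symmetric])
  then show ?thesis by (simp add: algebra_simps)
qed

lemma expand:
  assumes b: "0 < b" and Q: "H2vec b N Q" and h: "H2vec b N h"
  shows "Jbar sl b N lam (vadd Q h) - Jbar sl b N lam Q - Lm sl b N lam Q h = Rm sl b N lam Q h"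
proof -
  let ?S = "\<Union>k\<in>{..<N}. {x\<in>{0..b}. d2 b (\<lambda>x. Q k x + h k x) x \<noteq> d2 b (Q k) x + d2 b (h k) x}"
  have neg: "negligible ?S"
  proof (rule negligible_Union)
    fix T assume "T \<in> (\<lambda>k. {x\<in>{0..b}. d2 b (\<lambda>x. Q k x + h k x) x \<noteq> d2 b (Q k) x + d2 b (h k) x}) ` {..<N}"
    then obtain k where k: "k < N" and T: "T = {x\<in>{0..b}. d2 b (\<lambda>x. Q k x + h k x) x \<noteq> d2 b (Q k) x + d2 b (h k) x}"
      by auto
    have "H2 b (\<lambda>x. Q k x + h k x)"
      using H2_add(1)[OF H2vec_facts(1)[OF Q b k] H2vec_facts(1)[OF h b k] b] .
    then show "negligible T" unfolding T
      using is_d2_unique[OF d2_is H2_add(2)[OF H2vec_facts(1)[OF Q b k] H2vec_facts(1)[OF h b k] b]] b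
      by auto
  qed auto
  let ?E1 = "\<lambda>x. (\<Sum>k<N. (d2 b (Q k) x + d2 b (h k) x + Fnl sl N (\<lambda>m. Pv b Q x m + Pv b h x m) k)\<^sup>2) * wt lam x"
  let ?E0 = "\<lambda>x. (\<Sum>k<N. (Ac sl b N Q k x)\<^sup>2) * wt lam x"
  let ?EL = "\<lambda>x. (\<Sum>k<N. 2 * Ac sl b N Q k x * (d2 b (h k) x + DF sl N (Pv b Q x) (Pv b h x) k)) * wt lam x"
  let ?R1 = "\<lambda>x. (\<Sum>k<N. (d2 b (h k) x + DF sl N (Pv b Q x) (Pv b h x) k + Fnl sl N (Pv b h x) k)\<^sup>2) * wt lam x"
  let ?R2 = "\<lambda>x. (\<Sum>k<N. 2 * Ac sl b N Q k x * Fnl sl N (Pv b h x) k) * wt lam x"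
  have J1: "Jbar sl b N lam (vadd Q h) = integral {0..b} ?E1"
    unfolding Jbar_alt
  proof (rule integral_spike[OF neg])
    fix x assume x: "x \<in> {0..b} - ?S"
    have "Ac sl b N (vadd Q h) k x = d2 b (Q k) x + d2 b (h k) x + Fnl sl N (\<lambda>m. Pv b Q x m + Pv b h x m) k"
      if k: "k < N" for k
    proof -
      have "d2 b (vadd Q h k) x = d2 b (Q k) x + d2 b (h k) x"
        using x k unfolding vadd_def by auto
      moreover have "Fnl sl N (Pv b (vadd Q h) x) k = Fnl sl N (\<lambda>m. Pv b Q x m + Pv b h x m) k"
      proof (rule Fnl_cong)
        fix m assume m: "m < N"
        show "Pv b (vadd Q h) x m = Pv b Q x m + Pv b h x m"
          unfolding Pv_def vadd_def
          using H2_add(3)[OF H2vec_facts(1)[OF Q b m] H2vec_facts(1)[OF h b m] b] x by auto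
      qed
      ultimately show ?thesis unfolding Ac_def by simp
    qed
    then show "?E1 x = (\<Sum>k<N. (Ac sl b N (vadd Q h) k x)\<^sup>2) * wt lam x" by simp
  qed
  have sqA: "\<And>k. k < N \<Longrightarrow> sqi b (Ac sl b N Q k)" using sqi_Ac[OF Q b] .
  have sqh: "\<And>k. k < N \<Longrightarrow> sqi b (d2 b (h k))" using H2vec_facts(3)[OF h b] .
  have sqQ: "\<And>k. k < N \<Longrightarrow> sqi b (d2 b (Q k))" using H2vec_facts(3)[OF Q b] .
  have sqF: "\<And>Z k. H2vec b N Z \<Longrightarrow> sqi b (\<lambda>x. Fnl sl N (Pv b Z x) k)" using sqi_Fnl b by blast
  have sqD: "\<And>k. sqi b (\<lambda>x. DF sl N (Pv b Q x) (Pv b h x) k)" using sqi_DF[OF Q h b] .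
  have sqFs: "\<And>k. sqi b (\<lambda>x. Fnl sl N (\<lambda>m. Pv b Q x m + Pv b h x m) k)"
    by (intro sqi_cont Fnl_cont continuous_intros H2vec_facts(5)[OF Q b] H2vec_facts(5)[OF h b])
  have i1: "?E1 integrable_on {0..b}"
    by (intro int_sumw_sq sqi_add sqQ sqh sqFs)
  have i0: "?E0 integrable_on {0..b}"
    by (intro int_sumw_sq sqA)
  have iL: "?EL integrable_on {0..b}"
    using int_sumw[of N b "\<lambda>k x. 2 * Ac sl b N Q k x" "\<lambda>k x. d2 b (h k) x + DF sl N (Pv b Q x) (Pv b h x) k" lam]
    by (simp add: sqi_cmul sqA sqi_add sqh sqD)
  have iR1: "?R1 integrable_on {0..b}"
    by (intro int_sumw_sq sqi_add sqh sqD sqF[OF h])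
  have iR2: "?R2 integrable_on {0..b}"
    using int_sumw[of N b "\<lambda>k x. 2 * Ac sl b N Q k x" "\<lambda>k x. Fnl sl N (Pv b h x) k" lam]
    by (simp add: sqi_cmul sqA sqF[OF h])
  have "Jbar sl b N lam (vadd Q h) - Jbar sl b N lam Q - Lm sl b N lam Q h
      = integral {0..b} (\<lambda>x. ?E1 x - ?E0 x - ?EL x)"
    unfolding J1 Jbar_alt[of sl b N lam Q] Lm_def
    using i1 i0 iL by (simp add: integral_diff integrable_diff)
  also have "\<dots> = integral {0..b} (\<lambda>x. ?R1 x + ?R2 x)"
  proof (rule integral_cong)
    fix x
    show "?E1 x - ?E0 x - ?EL x = ?R1 x + ?R2 x"
      using pointwise_id[where N=N and g="\<lambda>k. d2 b (Q k) x" and H="\<lambda>k. d2 b (h k) x" and sl=sl and p="Pv b Q x" and v="Pv b h x" and w="wt lam x"]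
      unfolding Ac_def by simp
  qed
  also have "\<dots> = Rm sl b N lam Q h"
    unfolding Rm_def using iR1 iR2 by (simp add: integral_add)
  finally show ?thesis .
qed



lemma discr:
  fixes A B C :: real
  assumes "0 \<le> A" "\<And>t. 0 \<le> A * t\<^sup>2 - 2 * B * t + C"
  shows "B\<^sup>2 \<le> A * C"
proof (cases "A = 0")
  case True
  show ?thesis
  proof (cases "B = 0")
    case False
    have "0 \<le> A * ((C + 1) / (2 * B))\<^sup>2 - 2 * B * ((C + 1) / (2 * B)) + C" by (rule assms(2))
    then show ?thesis using True False by (simp add: field_simps)
  qed (use True in simp)
next
  case False
  then have A: "A > 0" using assms(1) by simp
  have "0 \<le> A * (B / A)\<^sup>2 - 2 * B * (B / A) + C" by (rule assms(2))
  then have "0 \<le> C - B\<^sup>2 / A" using A by (simp add: power2_eq_square field_simps)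
  then show ?thesis using A by (simp add: field_simps)
qed

lemma CS_integral:
  fixes f g :: "real \<Rightarrow> real"
  assumes "(\<lambda>x. (f x)\<^sup>2) integrable_on S" "(\<lambda>x. (g x)\<^sup>2) integrable_on S" "(\<lambda>x. f x * g x) integrable_on S"
  shows "(integral S (\<lambda>x. f x * g x))\<^sup>2 \<le> integral S (\<lambda>x. (f x)\<^sup>2) * integral S (\<lambda>x. (g x)\<^sup>2)"
proof (rule discr)
  show "0 \<le> integral S (\<lambda>x. (f x)\<^sup>2)" using assms(1) by (rule integral_nonneg) simp
  fix t :: real
  have i: "(\<lambda>x. t\<^sup>2 * (f x)\<^sup>2 - 2 * t * (f x * g x) + (g x)\<^sup>2) integrable_on S"
    using assms by (intro integrable_add integrable_diff intg_cmul) auto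
  have "0 \<le> integral S (\<lambda>x. t\<^sup>2 * (f x)\<^sup>2 - 2 * t * (f x * g x) + (g x)\<^sup>2)"
  proof (rule integral_nonneg[OF i])
    fix x have "0 \<le> (t * f x - g x)\<^sup>2" by simp
    then show "0 \<le> t\<^sup>2 * (f x)\<^sup>2 - 2 * t * (f x * g x) + (g x)\<^sup>2"
      by (simp add: power2_eq_square algebra_simps)
  qed
  also have "\<dots> = t\<^sup>2 * integral S (\<lambda>x. (f x)\<^sup>2) - 2 * t * integral S (\<lambda>x. f x * g x) + integral S (\<lambda>x. (g x)\<^sup>2)"
    using assms by (simp add: integral_add integral_diff intg_cmul integrable_diff)
  finally show "0 \<le> integral S (\<lambda>x. (f x)\<^sup>2) * t\<^sup>2 - 2 * integral S (\<lambda>x. f x * g x) * t + integral S (\<lambda>x. (g x)\<^sup>2)"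
    by (simp add: algebra_simps)
qed

lemma exp_int:
  fixes lam x :: real
  assumes "lam > 0" "0 \<le> x"
  shows "integral {0..x} (\<lambda>t. (exp (lam * t))\<^sup>2) = (exp (2 * lam * x) - 1) / (2 * lam)"
proof -
  have "((\<lambda>t. (exp (lam * t))\<^sup>2) has_integral ((\<lambda>t. exp (2 * lam * t) / (2 * lam)) x - (\<lambda>t. exp (2 * lam * t) / (2 * lam)) 0)) {0..x}"
  proof (rule fundamental_theorem_of_calculus)
    show "0 \<le> x" using assms(2) .
  next
    fix t :: real
    have "((\<lambda>t. exp (2 * lam * t) / (2 * lam)) has_real_derivative (exp (2 * lam * t) * (2 * lam) / (2 * lam))) (at t within {0..x})"
      by (auto intro!: derivative_eq_intros)
    moreover have "exp (2 * lam * t) = (exp (lam * t))\<^sup>2"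
      using exp_double[of "lam * t"] by (simp add: mult.assoc)
    then have "exp (2 * lam * t) * (2 * lam) / (2 * lam) = (exp (lam * t))\<^sup>2"
      using assms(1) by simp
    ultimately show "((\<lambda>t. exp (2 * lam * t) / (2 * lam)) has_vector_derivative (exp (lam * t))\<^sup>2) (at t within {0..x})"
      by (simp add: has_real_derivative_iff_has_vector_derivative)
  qed
  then show ?thesis by (simp add: integral_unique diff_divide_distrib)
qed

lemma expm1: "exp (- a) * exp a = (1::real)" by (simp add: exp_minus)

lemma expm: "exp (- a * t) * g * exp (a * t) = (g::real)"
proof -
  have "exp (- a * t) * exp (a * t) = 1" by (simp add: exp_minus field_simps)
  then show ?thesis by (metis mult.commute mult.left_commute mult.right_neutral)
qed

lemma d1_CS:
  assumes d: "is_d2 b q g" and x: "x \<in> {0..b}"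
  shows "(d1 b q x - d1 b q 0)\<^sup>2 \<le> integral {0..x} (\<lambda>t. (g t)\<^sup>2 * wt lam t) * integral {0..x} (\<lambda>t. (exp (lam * t))\<^sup>2)"
proof -
  have b: "0 \<le> b" using x by auto
  have sg: "sqi b g" using is_d2_sqi[OF d b] .
  have s1: "sqi b (\<lambda>t. exp (- lam * t) * g t)" by (intro sqi_mult_cont sg continuous_intros)
  have sub: "{0..x} \<subseteq> {0..b}" using x by auto
  have "d1 b q x - d1 b q 0 = integral {0..x} g" using d1_repr[OF d x] by simp
  also have "\<dots> = integral {0..x} (\<lambda>t. (exp (- lam * t) * g t) * exp (lam * t))"
    by (rule integral_cong) (simp add: expm expm1)
  finally have eq: "d1 b q x - d1 b q 0 = integral {0..x} (\<lambda>t. (exp (- lam * t) * g t) * exp (lam * t))" .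
  have i1: "(\<lambda>t. (exp (- lam * t) * g t)\<^sup>2) integrable_on {0..x}"
    using s1 sub unfolding sqi_def by (auto intro: integrable_on_subinterval)
  have i2: "(\<lambda>t. (exp (lam * t))\<^sup>2) integrable_on {0..x}"
    by (intro integrable_continuous_interval continuous_intros)
  have i3: "(\<lambda>t. (exp (- lam * t) * g t) * exp (lam * t)) integrable_on {0..x}"
  proof -
    have "g integrable_on {0..x}" using is_d2_int[OF d b] sub by (rule integrable_on_subinterval)
    then show ?thesis by (rule integrable_eq) (simp add: expm expm1)
  qed
  have "(d1 b q x - d1 b q 0)\<^sup>2 \<le> integral {0..x} (\<lambda>t. (exp (- lam * t) * g t)\<^sup>2) * integral {0..x} (\<lambda>t. (exp (lam * t))\<^sup>2)"
    unfolding eq by (rule CS_integral[OF i1 i2 i3])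
  also have "integral {0..x} (\<lambda>t. (exp (- lam * t) * g t)\<^sup>2) = integral {0..x} (\<lambda>t. (g t)\<^sup>2 * wt lam t)"
    by (rule integral_cong) (simp add: wt_def power_mult_distrib)
  finally show ?thesis .
qed

lemma sqw_int: "sqi b f \<Longrightarrow> (\<lambda>t. (f t)\<^sup>2 * wt lam t) integrable_on {0..b}"
  using sqi_prod[of b f "\<lambda>t. wt lam t * f t"] sqi_mult_cont[OF _ wt_cont]
  by (simp add: power2_eq_square mult_ac)

lemma int_mono_sub:
  assumes "sqi b f" "x \<in> {0..b}" "continuous_on {0..b} w" "\<And>t. 0 \<le> w t"
  shows "integral {0..x} (\<lambda>t. (f t)\<^sup>2 * w t) \<le> integral {0..b} (\<lambda>t. (f t)\<^sup>2 * w t)"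
proof -
  have s: "sqi b (\<lambda>t. w t * f t)" by (rule sqi_mult_cont[OF assms(1,3)])
  have i: "(\<lambda>t. (f t)\<^sup>2 * w t) integrable_on {0..b}"
    using sqi_prod[OF assms(1) s] by (simp add: power2_eq_square mult_ac)
  show ?thesis
    using assms(2,4) by (intro integral_subset_le i integrable_on_subinterval[OF i]) auto
qed

lemma d1_bound_w:
  assumes d: "is_d2 b q g" and x: "x \<in> {0..b}" and lam: "lam > 0"
  shows "(d1 b q x - d1 b q 0)\<^sup>2 * wt lam x \<le> integral {0..b} (\<lambda>t. (g t)\<^sup>2 * wt lam t) / (2 * lam)"
proof -
  have b: "0 \<le> b" using x by auto
  let ?I = "integral {0..b} (\<lambda>t. (g t)\<^sup>2 * wt lam t)"
  have I0: "integral {0..x} (\<lambda>t. (g t)\<^sup>2 * wt lam t) \<le> ?I"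
    by (rule int_mono_sub[OF is_d2_sqi[OF d b] x wt_cont]) (simp add: wt_def)
  have Inn: "0 \<le> integral {0..x} (\<lambda>t. (g t)\<^sup>2 * wt lam t)"
    by (intro integral_nonneg integrable_on_subinterval[OF sqw_int[OF is_d2_sqi[OF d b]]]) (use x in \<open>auto simp: wt_def\<close>)
  have In: "0 \<le> ?I" using Inn I0 by linarith
  have E: "integral {0..x} (\<lambda>t. (exp (lam * t))\<^sup>2) \<le> exp (2 * lam * x) / (2 * lam)"
    using exp_int[OF lam, of x] x lam by (simp add: divide_right_mono)
  have En: "0 \<le> integral {0..x} (\<lambda>t. (exp (lam * t))\<^sup>2)"
    by (intro integral_nonneg integrable_continuous_interval continuous_intros) simp
  have "(d1 b q x - d1 b q 0)\<^sup>2 \<le> ?I * (exp (2 * lam * x) / (2 * lam))"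
    using d1_CS[OF d x, of lam] mult_mono[OF I0 E In En] by linarith
  then have "(d1 b q x - d1 b q 0)\<^sup>2 * wt lam x \<le> ?I * (exp (2 * lam * x) / (2 * lam)) * wt lam x"
    by (rule mult_right_mono[OF _ less_imp_le[OF wt_pos]])
  also have "\<dots> = ?I * (exp (2 * lam * x) * wt lam x) / (2 * lam)" by (simp add: algebra_simps)
  also have "exp (2 * lam * x) * wt lam x = (exp (lam * x) * exp (- (lam * x)))\<^sup>2"
    unfolding wt_def using exp_double[of "lam * x"] by (simp add: power_mult_distrib mult.assoc)
  also have "\<dots> = 1" using expm1[of "lam * x"] by (simp add: mult.commute)
  finally show ?thesis by simp
qed



lemma d1_bound0:
  assumes d: "is_d2 b q g" and x: "x \<in> {0..b}"
  shows "(d1 b q x - d1 b q 0)\<^sup>2 \<le> b * integral {0..b} (\<lambda>t. (g t)\<^sup>2)"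
proof -
  have b: "0 \<le> b" using x by auto
  have "(d1 b q x - d1 b q 0)\<^sup>2 \<le> integral {0..x} (\<lambda>t. (g t)\<^sup>2 * wt 0 t) * integral {0..x} (\<lambda>t. (exp (0 * t))\<^sup>2)"
    by (rule d1_CS[OF d x])
  also have "\<dots> = integral {0..x} (\<lambda>t. (g t)\<^sup>2) * x" using x by (simp add: wt_def)
  also have "\<dots> \<le> integral {0..b} (\<lambda>t. (g t)\<^sup>2) * b"
  proof (rule mult_mono)
    show "integral {0..x} (\<lambda>t. (g t)\<^sup>2) \<le> integral {0..b} (\<lambda>t. (g t)\<^sup>2)"
      using int_mono_sub[OF is_d2_sqi[OF d b] x, of "\<lambda>t. 1"] by simp
    show "0 \<le> integral {0..b} (\<lambda>t. (g t)\<^sup>2)"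
      using is_d2_sqi[OF d b] unfolding sqi_def by (intro integral_nonneg) auto
  qed (use x in auto)
  finally show ?thesis by (simp add: mult.commute)
qed

lemma H2_cont: "H2 b q \<Longrightarrow> continuous_on {0..b} q"
  unfolding H2_def by (intro continuous_on_vector_derivative) auto

definition Tn :: "real \<Rightarrow> (real \<Rightarrow> real) \<Rightarrow> real" where
  "Tn b q = integral {0..b} (\<lambda>x. (q x)\<^sup>2 + (d1 b q x)\<^sup>2 + (d2 b q x)\<^sup>2)"

definition Gn :: "real \<Rightarrow> (real \<Rightarrow> real) \<Rightarrow> real" where
  "Gn b q = integral {0..b} (\<lambda>x. (d2 b q x)\<^sup>2)"

lemma Gn_nonneg: "H2 b q \<Longrightarrow> 0 \<le> b \<Longrightarrow> 0 \<le> Gn b q"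
  unfolding Gn_def using is_d2_sqi[OF d2_is] unfolding sqi_def by (intro integral_nonneg) auto

lemma Tn_ge: assumes "H2 b q" "0 \<le> b" shows "Gn b q \<le> Tn b q"
proof -
  have s: "sqi b (d2 b q)" using is_d2_sqi[OF d2_is[OF assms(1)] assms(2)] .
  have i01: "(\<lambda>x. (q x)\<^sup>2 + (d1 b q x)\<^sup>2) integrable_on {0..b}"
    using H2_cont[OF assms(1)] d1_cont[OF d2_is[OF assms(1)] assms(2)]
    by (intro integrable_continuous_interval continuous_intros) auto
  have "(\<lambda>x. (q x)\<^sup>2 + (d1 b q x)\<^sup>2 + (d2 b q x)\<^sup>2) integrable_on {0..b}"
    using integrable_add[OF i01, of "\<lambda>x. (d2 b q x)\<^sup>2"] s unfolding sqi_def by auto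
  then show ?thesis unfolding Gn_def Tn_def using s unfolding sqi_def
    by (intro integral_le) auto
qed

lemma H2norm_sq: "H2norm b N h = sqrt (\<Sum>n<N. Tn b (h n))"
  unfolding H2norm_def Tn_def ..

lemma Tn_nonneg: "H2 b q \<Longrightarrow> 0 \<le> b \<Longrightarrow> 0 \<le> Tn b q"
  using Tn_ge Gn_nonneg by fastforce

lemma H2norm_sq2: "H2vec b N h \<Longrightarrow> 0 \<le> b \<Longrightarrow> (H2norm b N h)\<^sup>2 = (\<Sum>n<N. Tn b (h n))"
proof -
  assume a: "H2vec b N h" "0 \<le> b"
  have "0 \<le> (\<Sum>n<N. Tn b (h n))" using a unfolding H2vec_def by (intro sum_nonneg Tn_nonneg) auto
  then show ?thesis unfolding H2norm_sq by simp
qed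

lemma Gn_le_norm: "H2vec b N h \<Longrightarrow> 0 \<le> b \<Longrightarrow> (\<Sum>n<N. Gn b (h n)) \<le> (H2norm b N h)\<^sup>2"
proof -
  assume a: "H2vec b N h" "0 \<le> b"
  have "(\<Sum>n<N. Gn b (h n)) \<le> (\<Sum>n<N. Tn b (h n))" using a unfolding H2vec_def by (intro sum_mono Tn_ge) auto
  then show ?thesis using H2norm_sq2[OF a] by simp
qed

lemma Tn_le:
  assumes h: "H2 b q" and b: "0 < b" and q0: "q 0 = 0" and d0: "d1 b q 0 = 0"
  shows "Tn b q \<le> (1 + b\<^sup>2 + b^4) * Gn b q"
proof -
  have d: "is_d2 b q (d2 b q)" using d2_is[OF h] .
  let ?G = "Gn b q"
  have G0: "0 \<le> ?G" using Gn_nonneg h b by auto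
  have s: "sqi b (d2 b q)" using is_d2_sqi[OF d] b by auto
  have c1: "continuous_on {0..b} (d1 b q)" using d1_cont[OF d] b by auto
  have c0: "continuous_on {0..b} q" using H2_cont[OF h] .
  have bd1: "(d1 b q x)\<^sup>2 \<le> b * ?G" if "x \<in> {0..b}" for x
    using d1_bound0[OF d that] d0 unfolding Gn_def by simp
  define M where "M = sqrt (b * ?G)"
  have M0: "0 \<le> M" unfolding M_def using b G0 by simp
  have bd1': "\<bar>d1 b q x\<bar> \<le> M" if "x \<in> {0..b}" for x
    using real_sqrt_le_mono[OF bd1[OF that]] unfolding M_def by simp
  have bd0: "(q x)\<^sup>2 \<le> b\<^sup>2 * (b * ?G)" if x: "x \<in> {0..b}" for x
  proof -
    have "(d1 b q has_integral (q x - q 0)) {0..x}"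
    proof (rule fundamental_theorem_of_calculus)
      show "0 \<le> x" using x by simp
      fix t assume t: "t \<in> {0..x}"
      then have "(q has_vector_derivative d1 b q t) (at t within {0..b})"
        using h x unfolding H2_def by auto
      then show "(q has_vector_derivative d1 b q t) (at t within {0..x})"
        by (rule has_vector_derivative_within_subset) (use x in auto)
    qed
    then have qi: "integral {0..x} (d1 b q) = q x - q 0" by (rule integral_unique)
    have "norm (integral {0..x} (d1 b q)) \<le> integral {0..x} (\<lambda>t. M)"
      using bd1' x \<open>(d1 b q has_integral (q x - q 0)) {0..x}\<close>
      by (intro integral_norm_bound_integral) auto
    then have "\<bar>q x\<bar> \<le> M * x" using x q0 qi by (simp add: mult.commute)
    also have "\<dots> \<le> M * b" using x M0 by (simp add: mult_left_mono)
    finally have "\<bar>q x\<bar> \<le> M * b" .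
    then have "\<bar>q x\<bar>\<^sup>2 \<le> (M * b)\<^sup>2" by (intro power_mono) auto
    also have "\<dots> = b\<^sup>2 * (b * ?G)" unfolding M_def using b G0 by (simp add: power_mult_distrib)
    finally show ?thesis by simp
  qed
  have i0: "(\<lambda>x. (q x)\<^sup>2) integrable_on {0..b}" and i1: "(\<lambda>x. (d1 b q x)\<^sup>2) integrable_on {0..b}"
    using c0 c1 by (auto intro!: integrable_continuous_interval continuous_intros)
  have i2: "(\<lambda>x. (d2 b q x)\<^sup>2) integrable_on {0..b}" using s unfolding sqi_def by auto
  have "Tn b q = integral {0..b} (\<lambda>x. (q x)\<^sup>2) + integral {0..b} (\<lambda>x. (d1 b q x)\<^sup>2) + ?G"
    unfolding Tn_def Gn_def using i0 i1 i2 by (simp add: integral_add integrable_add)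
  also have "integral {0..b} (\<lambda>x. (q x)\<^sup>2) \<le> integral {0..b} (\<lambda>x. b\<^sup>2 * (b * ?G))"
    using bd0 i0 by (intro integral_le) auto
  also have "integral {0..b} (\<lambda>x. (d1 b q x)\<^sup>2) \<le> integral {0..b} (\<lambda>x. b * ?G)"
    using bd1 i1 by (intro integral_le) auto
  finally have "Tn b q \<le> b * (b\<^sup>2 * (b * ?G)) + b * (b * ?G) + ?G" using b by (simp add: mult_ac)
  also have "\<dots> = (1 + b\<^sup>2 + b^4) * ?G" by (simp add: power2_eq_square power4_eq_xxxx algebra_simps)
  finally show ?thesis .
qed

lemma H2norm_le:
  assumes h: "H2vec b N h" and b: "0 < b" and z: "\<And>n. n < N \<Longrightarrow> h n 0 = 0 \<and> d1 b (h n) 0 = 0"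
  shows "(H2norm b N h)\<^sup>2 \<le> (1 + b\<^sup>2 + b^4) * (\<Sum>n<N. Gn b (h n))"
proof -
  have "(H2norm b N h)\<^sup>2 = (\<Sum>n<N. Tn b (h n))" using H2norm_sq2[OF h] b by simp
  also have "\<dots> \<le> (\<Sum>n<N. (1 + b\<^sup>2 + b^4) * Gn b (h n))"
    using h z b unfolding H2vec_def by (intro sum_mono Tn_le) auto
  finally show ?thesis by (simp add: sum_distrib_left)
qed



lemma H2_scale:
  assumes "H2 b q" "0 < b"
  shows "H2 b (\<lambda>x. t * q x)" "is_d2 b (\<lambda>x. t * q x) (\<lambda>x. t * d2 b q x)"
    "x \<in> {0..b} \<Longrightarrow> d1 b (\<lambda>x. t * q x) x = t * d1 b q x"
  using H2_lin[OF assms(1) assms(1) assms(2), of t 0] d1_lin(2)[OF assms(1) assms(1) assms(2), of x t 0] by auto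

lemma Tn_scale:
  assumes h: "H2 b q" and b: "0 < b"
  shows "Tn b (\<lambda>x. t * q x) = t\<^sup>2 * Tn b q"
proof -
  have "Tn b (\<lambda>x. t * q x) = integral {0..b} (\<lambda>x. (t * q x)\<^sup>2 + (d1 b (\<lambda>x. t * q x) x)\<^sup>2 + (t * d2 b q x)\<^sup>2)"
    unfolding Tn_def
    by (rule is_d2_integral_eq[OF d2_is[OF H2_scale(1)[OF h b]] H2_scale(2)[OF h b]]) (use b in simp)
  also have "\<dots> = integral {0..b} (\<lambda>x. t\<^sup>2 * ((q x)\<^sup>2 + (d1 b q x)\<^sup>2 + (d2 b q x)\<^sup>2))"
    by (rule integral_cong) (simp add: H2_scale(3)[OF h b] power_mult_distrib algebra_simps)
  also have "\<dots> = t\<^sup>2 * Tn b q" unfolding Tn_def by simp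
  finally show ?thesis .
qed

lemma H2norm_scale:
  assumes h: "H2vec b N h" and b: "0 < b"
  shows "H2norm b N (\<lambda>n x. t * h n x) = \<bar>t\<bar> * H2norm b N h"
proof -
  have "H2norm b N (\<lambda>n x. t * h n x) = sqrt (\<Sum>n<N. t\<^sup>2 * Tn b (h n))"
    unfolding H2norm_sq using h b unfolding H2vec_def by (simp add: Tn_scale)
  also have "\<dots> = sqrt (t\<^sup>2) * sqrt (\<Sum>n<N. Tn b (h n))"
    by (simp add: sum_distrib_left[symmetric] real_sqrt_mult)
  finally show ?thesis unfolding H2norm_sq by simp
qed

lemma H2norm_nonneg: "H2vec b N h \<Longrightarrow> 0 \<le> b \<Longrightarrow> 0 \<le> H2norm b N h"
  unfolding H2norm_sq H2vec_def by (auto intro!: sum_nonneg Tn_nonneg)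

lemma H0_lin:
  assumes b: "0 < b" and h1: "H0vec b N h1" and h2: "H0vec b N h2"
  shows "H0vec b N (\<lambda>n x. a * h1 n x + c * h2 n x)"
  unfolding H0vec_def H2vec_def
proof (intro conjI allI impI)
  fix n assume n: "n < N"
  have H: "H2 b (h1 n)" "H2 b (h2 n)" using h1 h2 n unfolding H0vec_def H2vec_def by auto
  show "H2 b (\<lambda>x. a * h1 n x + c * h2 n x)" by (rule H2_lin(1)[OF H b])
  show "a * h1 n 0 + c * h2 n 0 = 0" using h1 h2 n unfolding H0vec_def by simp
  show "d1 b (\<lambda>x. a * h1 n x + c * h2 n x) 0 = 0"
    using d1_lin(2)[OF H b, of 0] h1 h2 n b unfolding H0vec_def by simp
  show "d1 b (\<lambda>x. a * h1 n x + c * h2 n x) b = 0"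
    using d1_lin(2)[OF H b, of b] h1 h2 n b unfolding H0vec_def by simp
next
  fix n assume n: "N \<le> n"
  then show "(\<lambda>x. a * h1 n x + c * h2 n x) = (\<lambda>x. 0)"
    using h1 h2 unfolding H0vec_def H2vec_def by auto
qed

lemma neg_lin:
  fixes N :: nat
  assumes b: "0 < b" and H: "\<And>k. k < N \<Longrightarrow> H2 b (f k) \<and> H2 b (g k)"
  shows "negligible (\<Union>k\<in>{..<N}. {x\<in>{0..b}. d2 b (\<lambda>x. a * f k x + c * g k x) x \<noteq> a * d2 b (f k) x + c * d2 b (g k) x})"
proof (rule negligible_Union)
  fix T assume "T \<in> (\<lambda>k. {x\<in>{0..b}. d2 b (\<lambda>x. a * f k x + c * g k x) x \<noteq> a * d2 b (f k) x + c * d2 b (g k) x}) ` {..<N}"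
  then obtain k where k: "k < N" and T: "T = {x\<in>{0..b}. d2 b (\<lambda>x. a * f k x + c * g k x) x \<noteq> a * d2 b (f k) x + c * d2 b (g k) x}"
    by auto
  have Hk: "H2 b (f k)" "H2 b (g k)" using H k by auto
  show "negligible T" unfolding T
    using is_d2_unique[OF d2_is[OF H2_lin(1)[OF Hk b]] H2_lin(2)[OF Hk b]] b by auto
qed auto

lemma Pv_lin:
  assumes b: "0 < b" and h1: "H2vec b N h1" and h2: "H2vec b N h2" and x: "x \<in> {0..b}" and m: "m < N"
  shows "Pv b (\<lambda>n x. a * h1 n x + c * h2 n x) x m = a * Pv b h1 x m + c * Pv b h2 x m"
  unfolding Pv_def using d1_lin(2)[OF H2vec_facts(1)[OF h1 b m] H2vec_facts(1)[OF h2 b m] b x] by simp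

lemma Lm_lin:
  assumes b: "0 < b" and Q: "H2vec b N Q" and h1: "H2vec b N h1" and h2: "H2vec b N h2"
  shows "Lm sl b N lam Q (\<lambda>n x. a * h1 n x + c * h2 n x) = a * Lm sl b N lam Q h1 + c * Lm sl b N lam Q h2"
proof -
  let ?h = "\<lambda>n x. a * h1 n x + c * h2 n x"
  let ?E = "\<lambda>h x. (\<Sum>k<N. 2 * Ac sl b N Q k x * (d2 b (h k) x + DF sl N (Pv b Q x) (Pv b h x) k)) * wt lam x"
  have neg: "negligible (\<Union>k\<in>{..<N}. {x\<in>{0..b}. d2 b (\<lambda>x. a * h1 k x + c * h2 k x) x \<noteq> a * d2 b (h1 k) x + c * d2 b (h2 k) x})"
    using neg_lin[OF b, of N h1 h2 a c] H2vec_facts(1)[OF h1 b] H2vec_facts(1)[OF h2 b] by blast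
  have "Lm sl b N lam Q ?h = integral {0..b} (\<lambda>x. a * ?E h1 x + c * ?E h2 x)"
    unfolding Lm_def
  proof (rule integral_spike[OF neg])
    fix x assume x: "x \<in> {0..b} - (\<Union>k\<in>{..<N}. {x\<in>{0..b}. d2 b (\<lambda>x. a * h1 k x + c * h2 k x) x \<noteq> a * d2 b (h1 k) x + c * d2 b (h2 k) x})"
    have "2 * Ac sl b N Q k x * (d2 b (?h k) x + DF sl N (Pv b Q x) (Pv b ?h x) k)
        = a * (2 * Ac sl b N Q k x * (d2 b (h1 k) x + DF sl N (Pv b Q x) (Pv b h1 x) k))
        + c * (2 * Ac sl b N Q k x * (d2 b (h2 k) x + DF sl N (Pv b Q x) (Pv b h2 x) k))" if k: "k < N" for k
    proof -
      have "d2 b (?h k) x = a * d2 b (h1 k) x + c * d2 b (h2 k) x" using x k by auto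
      moreover have "DF sl N (Pv b Q x) (Pv b ?h x) k = DF sl N (Pv b Q x) (\<lambda>m. a * Pv b h1 x m + c * Pv b h2 x m) k"
        by (rule DF_cong) (use Pv_lin[OF b h1 h2] x in auto)
      ultimately show ?thesis by (simp add: DF_lin algebra_simps)
    qed
    then show "a * ?E h1 x + c * ?E h2 x = ?E ?h x"
      by (simp add: sum_distrib_left sum_distrib_right sum.distrib[symmetric] algebra_simps)
  qed
  also have "\<dots> = a * integral {0..b} (?E h1) + c * integral {0..b} (?E h2)"
  proof -
    have i: "?E h integrable_on {0..b}" if h: "H2vec b N h" for h
      using int_sumw[of N b "\<lambda>k x. 2 * Ac sl b N Q k x" "\<lambda>k x. d2 b (h k) x + DF sl N (Pv b Q x) (Pv b h x) k" lam]
      by (simp add: sqi_cmul sqi_Ac[OF Q b] sqi_add H2vec_facts(3)[OF h b] sqi_DF[OF Q h b])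
    show ?thesis using i[OF h1] i[OF h2] by (simp add: integral_add intg_cmul)
  qed
  finally show ?thesis unfolding Lm_def .
qed



lemma absA: "\<bar>a::real\<bar> \<le> (1 + a\<^sup>2) / 2"
proof -
  have "0 \<le> (\<bar>a\<bar> - 1)\<^sup>2" by simp
  then show ?thesis by (simp add: power2_eq_square algebra_simps)
qed

lemma wt_le1: "0 \<le> lam \<Longrightarrow> 0 \<le> x \<Longrightarrow> wt lam x \<le> 1"
  unfolding wt_def by (simp add: power_le_one)

lemma Pbound:
  fixes N :: nat
  assumes Q: "H2vec b N Q" and b: "0 < b"
  shows "\<exists>P\<ge>0. \<forall>x\<in>{0..b}. \<forall>m<N. \<bar>Pv b Q x m\<bar> \<le> P"
proof -
  have "\<forall>m<N. \<exists>B. \<forall>x\<in>{0..b}. \<bar>Pv b Q x m\<bar> \<le> B"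
  proof (intro allI impI)
    fix m assume m: "m < N"
    have "bounded ((\<lambda>x. Pv b Q x m) ` {0..b})"
      by (rule compact_imp_bounded[OF compact_continuous_image[OF H2vec_facts(5)[OF Q b m] compact_Icc]])
    then obtain B where "\<forall>y\<in>(\<lambda>x. Pv b Q x m) ` {0..b}. norm y \<le> B" unfolding bounded_iff by blast
    then show "\<exists>B. \<forall>x\<in>{0..b}. \<bar>Pv b Q x m\<bar> \<le> B" by auto
  qed
  then obtain B where B: "\<And>m x. m < N \<Longrightarrow> x \<in> {0..b} \<Longrightarrow> \<bar>Pv b Q x m\<bar> \<le> B m" by metis
  show ?thesis
  proof (intro exI conjI ballI allI impI)
    show "0 \<le> (\<Sum>m<N. \<bar>B m\<bar>)" by (simp add: sum_nonneg)
    fix x m assume x: "x \<in> {0..b}" and m: "m < N"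
    have "B m \<le> \<bar>B m\<bar>" by simp
    also have "\<dots> \<le> (\<Sum>m<N. \<bar>B m\<bar>)" using m by (intro member_le_sum) auto
    finally show "\<bar>Pv b Q x m\<bar> \<le> (\<Sum>m<N. \<bar>B m\<bar>)" using B[OF m x] by linarith
  qed
qed

lemma Gn_le_sum: "H2vec b N h \<Longrightarrow> 0 \<le> b \<Longrightarrow> n < N \<Longrightarrow> Gn b (h n) \<le> (\<Sum>n<N. Gn b (h n))"
  unfolding H2vec_def by (intro member_le_sum Gn_nonneg) auto

lemma vbound:
  assumes h: "H0vec b N h" and b: "0 < b" and x: "x \<in> {0..b}" and n: "n < N"
  shows "\<bar>Pv b h x n\<bar> \<le> sqrt b * H2norm b N h"
proof -
  have hv: "H2vec b N h" using h unfolding H0vec_def by auto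
  have "(Pv b h x n)\<^sup>2 \<le> b * Gn b (h n)"
    using d1_bound0[OF H2vec_facts(2)[OF hv b n] x] h n unfolding H0vec_def Pv_def Gn_def by simp
  also have "\<dots> \<le> b * (H2norm b N h)\<^sup>2"
    using Gn_le_sum[OF hv _ n] Gn_le_norm[OF hv] b by (intro mult_left_mono) force+
  finally have "sqrt ((Pv b h x n)\<^sup>2) \<le> sqrt (b * (H2norm b N h)\<^sup>2)" by (rule real_sqrt_le_mono)
  then show ?thesis using H2norm_nonneg[OF hv] b by (simp add: real_sqrt_mult)
qed

lemma CS_w:
  assumes f: "sqi b f" and g: "sqi b g"
  shows "\<bar>integral {0..b} (\<lambda>x. f x * g x * wt lam x)\<bar>
     \<le> sqrt (integral {0..b} (\<lambda>x. (f x)\<^sup>2 * wt lam x)) * sqrt (integral {0..b} (\<lambda>x. (g x)\<^sup>2 * wt lam x))"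
proof -
  have sf: "sqi b (\<lambda>x. exp (- lam * x) * f x)" by (intro sqi_mult_cont f continuous_intros)
  have sg: "sqi b (\<lambda>x. exp (- lam * x) * g x)" by (intro sqi_mult_cont g continuous_intros)
  have e1: "\<And>x. (exp (- lam * x) * f x) * (exp (- lam * x) * g x) = f x * g x * wt lam x"
    by (simp add: wt_def power2_eq_square)
  have e2: "\<And>f x. (exp (- lam * x) * f x)\<^sup>2 = (f x)\<^sup>2 * wt lam x"
    by (simp add: wt_def power_mult_distrib)
  have "(integral {0..b} (\<lambda>x. (exp (- lam * x) * f x) * (exp (- lam * x) * g x)))\<^sup>2
     \<le> integral {0..b} (\<lambda>x. (exp (- lam * x) * f x)\<^sup>2) * integral {0..b} (\<lambda>x. (exp (- lam * x) * g x)\<^sup>2)"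
    using sf sg sqi_prod[OF sf sg] unfolding sqi_def by (intro CS_integral) auto
  then have "(integral {0..b} (\<lambda>x. f x * g x * wt lam x))\<^sup>2
     \<le> integral {0..b} (\<lambda>x. (f x)\<^sup>2 * wt lam x) * integral {0..b} (\<lambda>x. (g x)\<^sup>2 * wt lam x)"
    unfolding e1 e2 .
  then have "sqrt ((integral {0..b} (\<lambda>x. f x * g x * wt lam x))\<^sup>2)
     \<le> sqrt (integral {0..b} (\<lambda>x. (f x)\<^sup>2 * wt lam x) * integral {0..b} (\<lambda>x. (g x)\<^sup>2 * wt lam x))"
    by (rule real_sqrt_le_mono)
  then show ?thesis by (simp add: real_sqrt_mult)
qed

lemma sqw_le:
  assumes "sqi b f" "0 \<le> lam"
  shows "integral {0..b} (\<lambda>x. (f x)\<^sup>2 * wt lam x) \<le> integral {0..b} (\<lambda>x. (f x)\<^sup>2)"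
proof (rule integral_le)
  show "(\<lambda>x. (f x)\<^sup>2 * wt lam x) integrable_on {0..b}" using sqw_int[OF assms(1)] .
  show "(\<lambda>x. (f x)\<^sup>2) integrable_on {0..b}" using assms(1) unfolding sqi_def by auto
  fix x assume "x \<in> {0..b}"
  then show "(f x)\<^sup>2 * wt lam x \<le> (f x)\<^sup>2"
    using wt_le1[OF assms(2), of x] by (simp add: mult_left_le)
qed

lemma sqw_nonneg: assumes "sqi b f" shows "0 \<le> integral {0..b} (\<lambda>x. (f x)\<^sup>2 * wt lam x)"
  by (rule integral_nonneg[OF sqw_int[OF assms]]) (auto intro!: mult_nonneg_nonneg less_imp_le[OF wt_pos])

lemma iw: "sqi b f \<Longrightarrow> sqi b g \<Longrightarrow> (\<lambda>x. f x * g x * wt lam x) integrable_on {0..b}"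
  using sqi_prod[of b f "\<lambda>x. wt lam x * g x"] sqi_mult_cont[OF _ wt_cont] by (simp add: mult_ac)

lemma int_A_bound:
  assumes A: "sqi b A" and D: "sqi b D" and c: "\<And>x. x \<in> {0..b} \<Longrightarrow> \<bar>D x\<bar> \<le> c"
    and lam: "0 \<le> lam" and b: "0 \<le> b"
  shows "\<bar>integral {0..b} (\<lambda>x. A x * D x * wt lam x)\<bar> \<le> c * ((b + integral {0..b} (\<lambda>x. (A x)\<^sup>2)) / 2)"
proof -
  have c0: "0 \<le> c" using c[of 0] b by auto
  have iA: "(\<lambda>x. (A x)\<^sup>2) integrable_on {0..b}" using A unfolding sqi_def by auto
  have i1: "(\<lambda>x. 1 + (A x)\<^sup>2) integrable_on {0..b}" using iA by (intro integrable_add) auto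
  have ig: "(\<lambda>x. c / 2 * (1 + (A x)\<^sup>2)) integrable_on {0..b}" using i1 by (rule intg_cmul)
  have "norm (integral {0..b} (\<lambda>x. A x * D x * wt lam x)) \<le> integral {0..b} (\<lambda>x. c / 2 * (1 + (A x)\<^sup>2))"
  proof (rule integral_norm_bound_integral[OF iw[OF A D] ig])
    fix x assume x: "x \<in> {0..b}"
    have w: "0 \<le> wt lam x" "wt lam x \<le> 1" using wt_pos[of lam x] wt_le1[OF lam, of x] x by auto
    have "\<bar>A x * D x * wt lam x\<bar> = \<bar>A x\<bar> * \<bar>D x\<bar> * wt lam x" using w by (simp add: abs_mult)
    also have "\<dots> \<le> \<bar>A x\<bar> * \<bar>D x\<bar>" using w by (simp add: mult_left_le)
    also have "\<dots> \<le> ((1 + (A x)\<^sup>2) / 2) * c" using absA[of "A x"] c[OF x] c0 by (intro mult_mono) auto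
    finally show "norm (A x * D x * wt lam x) \<le> c / 2 * (1 + (A x)\<^sup>2)" by (simp add: mult.commute)
  qed
  also have "\<dots> = c * ((b + integral {0..b} (\<lambda>x. (A x)\<^sup>2)) / 2)"
  proof -
    have "integral {0..b} (\<lambda>x. c / 2 * (1 + (A x)\<^sup>2)) = c / 2 * integral {0..b} (\<lambda>x. 1 + (A x)\<^sup>2)"
      by simp
    also have "integral {0..b} (\<lambda>x. 1 + (A x)\<^sup>2) = b + integral {0..b} (\<lambda>x. (A x)\<^sup>2)"
    proof -
      have "integral {0..b} (\<lambda>x. 1 + (A x)\<^sup>2) = integral {0..b} (\<lambda>x. 1) + integral {0..b} (\<lambda>x. (A x)\<^sup>2)"
        by (rule integral_add) (use iA in auto)
      then show ?thesis using b by simp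
    qed
    finally show ?thesis by simp
  qed
  finally show ?thesis by simp
qed



lemma Lm_split:
  assumes b: "0 < b" and Q: "H2vec b N Q" and h: "H2vec b N h"
  shows "Lm sl b N lam Q h = (\<Sum>k<N. 2 * integral {0..b} (\<lambda>x. Ac sl b N Q k x * d2 b (h k) x * wt lam x)
      + 2 * integral {0..b} (\<lambda>x. Ac sl b N Q k x * DF sl N (Pv b Q x) (Pv b h x) k * wt lam x))"
proof -
  have i1: "\<And>k. k < N \<Longrightarrow> (\<lambda>x. Ac sl b N Q k x * d2 b (h k) x * wt lam x) integrable_on {0..b}"
    by (intro iw sqi_Ac[OF Q b] H2vec_facts(3)[OF h b])
  have i2: "\<And>k. k < N \<Longrightarrow> (\<lambda>x. Ac sl b N Q k x * DF sl N (Pv b Q x) (Pv b h x) k * wt lam x) integrable_on {0..b}"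
    by (intro iw sqi_Ac[OF Q b] sqi_DF[OF Q h b])
  have "Lm sl b N lam Q h = integral {0..b} (\<lambda>x. \<Sum>k<N. 2 * (Ac sl b N Q k x * d2 b (h k) x * wt lam x)
      + 2 * (Ac sl b N Q k x * DF sl N (Pv b Q x) (Pv b h x) k * wt lam x))"
    unfolding Lm_def by (rule integral_cong) (simp add: sum_distrib_right sum_distrib_left sum.distrib algebra_simps)
  also have "\<dots> = (\<Sum>k<N. integral {0..b} (\<lambda>x. 2 * (Ac sl b N Q k x * d2 b (h k) x * wt lam x)
      + 2 * (Ac sl b N Q k x * DF sl N (Pv b Q x) (Pv b h x) k * wt lam x)))"
    using i1 i2 by (intro integral_sum) (auto intro!: integrable_add intg_cmul)
  also have "\<dots> = (\<Sum>k<N. 2 * integral {0..b} (\<lambda>x. Ac sl b N Q k x * d2 b (h k) x * wt lam x)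
      + 2 * integral {0..b} (\<lambda>x. Ac sl b N Q k x * DF sl N (Pv b Q x) (Pv b h x) k * wt lam x))"
    using i1 i2 by (intro sum.cong refl) (simp add: integral_add intg_cmul)
  finally show ?thesis .
qed

lemma Lm_bound:
  assumes b: "0 < b" and lam: "0 \<le> lam" and Q: "H2vec b N Q"
  shows "\<exists>K. \<forall>h. H0vec b N h \<longrightarrow> \<bar>Lm sl b N lam Q h\<bar> \<le> K * H2norm b N h"
proof -
  obtain P where P0: "0 \<le> P" and Pb: "\<And>x m. x \<in> {0..b} \<Longrightarrow> m < N \<Longrightarrow> \<bar>Pv b Q x m\<bar> \<le> P"
    using Pbound[OF Q b] by blast
  define AA where "AA k = integral {0..b} (\<lambda>x. (Ac sl b N Q k x)\<^sup>2)" for k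
  define K where "K = (\<Sum>k<N. 2 * sqrt (AA k) + 2 * (2 * Cf sl N * P * sqrt b) * ((b + AA k) / 2))"
  show ?thesis
  proof (intro exI allI impI)
    fix h assume h0: "H0vec b N h"
    have h: "H2vec b N h" using h0 unfolding H0vec_def by auto
    define \<nu> where "\<nu> = H2norm b N h"
    have \<nu>0: "0 \<le> \<nu>" unfolding \<nu>_def using H2norm_nonneg[OF h] b by auto
    have t1: "\<bar>integral {0..b} (\<lambda>x. Ac sl b N Q k x * d2 b (h k) x * wt lam x)\<bar> \<le> sqrt (AA k) * \<nu>"
      if k: "k < N" for k
    proof -
      have sA: "sqi b (Ac sl b N Q k)" using sqi_Ac[OF Q b k] .
      have sH: "sqi b (d2 b (h k))" using H2vec_facts(3)[OF h b k] .
      have "integral {0..b} (\<lambda>x. (d2 b (h k) x)\<^sup>2 * wt lam x) \<le> Gn b (h k)"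
        unfolding Gn_def by (rule sqw_le[OF sH lam])
      also have "\<dots> \<le> \<nu>\<^sup>2" unfolding \<nu>_def
        using Gn_le_sum[OF h _ k] Gn_le_norm[OF h] b by force
      finally have "sqrt (integral {0..b} (\<lambda>x. (d2 b (h k) x)\<^sup>2 * wt lam x)) \<le> \<nu>"
        using \<nu>0 real_sqrt_le_mono by fastforce
      moreover have "sqrt (integral {0..b} (\<lambda>x. (Ac sl b N Q k x)\<^sup>2 * wt lam x)) \<le> sqrt (AA k)"
        unfolding AA_def by (rule real_sqrt_le_mono[OF sqw_le[OF sA lam]])
      ultimately show ?thesis
        using CS_w[OF sA sH, of lam] sqw_nonneg[OF sA, of lam] sqw_nonneg[OF sH, of lam]
        by (smt (verit, best) mult_mono real_sqrt_ge_zero)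
    qed
    have t2: "\<bar>integral {0..b} (\<lambda>x. Ac sl b N Q k x * DF sl N (Pv b Q x) (Pv b h x) k * wt lam x)\<bar>
        \<le> (2 * Cf sl N * P * (sqrt b * \<nu>)) * ((b + AA k) / 2)" if k: "k < N" for k
      unfolding AA_def
    proof (rule int_A_bound[OF sqi_Ac[OF Q b k] sqi_DF[OF Q h b] _ lam])
      fix x assume x: "x \<in> {0..b}"
      show "\<bar>DF sl N (Pv b Q x) (Pv b h x) k\<bar> \<le> 2 * Cf sl N * P * (sqrt b * \<nu>)"
        using DF_bound[OF k, of "Pv b h x" "sqrt b * \<nu>" "Pv b Q x" P] vbound[OF h0 b x] Pb[OF x]
        unfolding \<nu>_def by blast
    qed (use b in auto)
    have "\<bar>Lm sl b N lam Q h\<bar> \<le> (\<Sum>k<N. \<bar>2 * integral {0..b} (\<lambda>x. Ac sl b N Q k x * d2 b (h k) x * wt lam x)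
      + 2 * integral {0..b} (\<lambda>x. Ac sl b N Q k x * DF sl N (Pv b Q x) (Pv b h x) k * wt lam x)\<bar>)"
      unfolding Lm_split[OF b Q h] by (rule sum_abs)
    also have "\<dots> \<le> (\<Sum>k<N. 2 * sqrt (AA k) * \<nu> + 2 * ((2 * Cf sl N * P * (sqrt b * \<nu>)) * ((b + AA k) / 2)))"
    proof (rule sum_mono)
      fix k assume "k \<in> {..<N}"
      then have k: "k < N" by simp
      show "\<bar>2 * integral {0..b} (\<lambda>x. Ac sl b N Q k x * d2 b (h k) x * wt lam x)
        + 2 * integral {0..b} (\<lambda>x. Ac sl b N Q k x * DF sl N (Pv b Q x) (Pv b h x) k * wt lam x)\<bar>
        \<le> 2 * sqrt (AA k) * \<nu> + 2 * ((2 * Cf sl N * P * (sqrt b * \<nu>)) * ((b + AA k) / 2))"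
        using t1[OF k] t2[OF k] by linarith
    qed
    also have "\<dots> = (\<Sum>k<N. (2 * sqrt (AA k) + 2 * (2 * Cf sl N * P * sqrt b) * ((b + AA k) / 2)) * \<nu>)"
      by (intro sum.cong refl) (simp add: algebra_simps)
    also have "\<dots> = K * \<nu>" unfolding K_def by (simp add: sum_distrib_right)
    finally show "\<bar>Lm sl b N lam Q h\<bar> \<le> K * H2norm b N h" unfolding \<nu>_def .
  qed
qed



lemma sq3: "((a::real) + b + c)\<^sup>2 \<le> 3 * a\<^sup>2 + 3 * b\<^sup>2 + 3 * c\<^sup>2"
proof -
  have "0 \<le> (a - b)\<^sup>2 + (a - c)\<^sup>2 + (b - c)\<^sup>2" by simp
  then show ?thesis by (simp add: power2_eq_square algebra_simps)
qed

lemma sq_le_of_abs: "\<bar>a::real\<bar> \<le> c \<Longrightarrow> a\<^sup>2 \<le> c\<^sup>2"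
  using power_mono[of "\<bar>a\<bar>" c 2] by simp

lemma int_1A:
  assumes "sqi b A" "0 \<le> b"
  shows "(\<lambda>x. (1 + (A x)\<^sup>2) * c) integrable_on {0..b}"
    "integral {0..b} (\<lambda>x. (1 + (A x)\<^sup>2) * c) = c * (b + integral {0..b} (\<lambda>x. (A x)\<^sup>2))"
proof -
  have iA: "(\<lambda>x. (A x)\<^sup>2) integrable_on {0..b}" using assms unfolding sqi_def by auto
  have i1: "(\<lambda>x. 1 + (A x)\<^sup>2) integrable_on {0..b}" using iA by (intro integrable_add) auto
  have e: "integral {0..b} (\<lambda>x. 1 + (A x)\<^sup>2) = integral {0..b} (\<lambda>x. 1) + integral {0..b} (\<lambda>x. (A x)\<^sup>2)"
    by (rule integral_add) (use iA in auto)
  have "(\<lambda>x. c * (1 + (A x)\<^sup>2)) integrable_on {0..b}" using i1 by (rule intg_cmul)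
  then show "(\<lambda>x. (1 + (A x)\<^sup>2) * c) integrable_on {0..b}" by (simp add: mult.commute)
  have "integral {0..b} (\<lambda>x. (1 + (A x)\<^sup>2) * c) = integral {0..b} (\<lambda>x. c * (1 + (A x)\<^sup>2))"
    by (simp add: mult.commute)
  also have "\<dots> = c * integral {0..b} (\<lambda>x. 1 + (A x)\<^sup>2)" by simp
  finally show "integral {0..b} (\<lambda>x. (1 + (A x)\<^sup>2) * c) = c * (b + integral {0..b} (\<lambda>x. (A x)\<^sup>2))"
    using e assms(2) by simp
qed

lemma Rm_parts_int:
  assumes b: "0 < b" and Q: "H2vec b N Q" and h: "H2vec b N h"
  shows "(\<lambda>x. (\<Sum>k<N. (d2 b (h k) x + DF sl N (Pv b Q x) (Pv b h x) k + Fnl sl N (Pv b h x) k)\<^sup>2) * wt lam x) integrable_on {0..b}"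
    "(\<lambda>x. (\<Sum>k<N. 2 * Ac sl b N Q k x * Fnl sl N (Pv b h x) k) * wt lam x) integrable_on {0..b}"
proof -
  show "(\<lambda>x. (\<Sum>k<N. (d2 b (h k) x + DF sl N (Pv b Q x) (Pv b h x) k + Fnl sl N (Pv b h x) k)\<^sup>2) * wt lam x) integrable_on {0..b}"
    by (intro int_sumw_sq sqi_add H2vec_facts(3)[OF h b] sqi_DF[OF Q h b] sqi_Fnl[OF h b])
  show "(\<lambda>x. (\<Sum>k<N. 2 * Ac sl b N Q k x * Fnl sl N (Pv b h x) k) * wt lam x) integrable_on {0..b}"
    using int_sumw[of N b "\<lambda>k x. 2 * Ac sl b N Q k x" "\<lambda>k x. Fnl sl N (Pv b h x) k" lam]
    by (simp add: sqi_cmul sqi_Ac[OF Q b] sqi_Fnl[OF h b])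
qed

lemma Rm_bound:
  assumes b: "0 < b" and lam: "0 \<le> lam" and Q: "H2vec b N Q"
  shows "\<exists>K. \<forall>h. H0vec b N h \<longrightarrow> H2norm b N h \<le> 1 \<longrightarrow> \<bar>Rm sl b N lam Q h\<bar> \<le> K * (H2norm b N h)\<^sup>2"
proof -
  obtain P where P0: "0 \<le> P" and Pb: "\<And>x m. x \<in> {0..b} \<Longrightarrow> m < N \<Longrightarrow> \<bar>Pv b Q x m\<bar> \<le> P"
    using Pbound[OF Q b] by blast
  define AA where "AA k = integral {0..b} (\<lambda>x. (Ac sl b N Q k x)\<^sup>2)" for k
  define C1 where "C1 = 3 * real N * (4 * (Cf sl N)\<^sup>2 * P\<^sup>2 * b + (Cf sl N)\<^sup>2 * b\<^sup>2)"
  define K where "K = 3 + b * C1 + Cf sl N * b * (\<Sum>k<N. b + AA k)"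
  show ?thesis
  proof (intro exI allI impI)
    fix h assume h0: "H0vec b N h" and le1: "H2norm b N h \<le> 1"
    have h: "H2vec b N h" using h0 unfolding H0vec_def by auto
    define \<nu> where "\<nu> = H2norm b N h"
    have \<nu>0: "0 \<le> \<nu>" unfolding \<nu>_def using H2norm_nonneg[OF h] b by auto
    define V where "V = sqrt b * \<nu>"
    have V0: "0 \<le> V" unfolding V_def using \<nu>0 b by simp
    have Vsq: "V\<^sup>2 = b * \<nu>\<^sup>2" unfolding V_def using b by (simp add: power_mult_distrib)
    have vb: "\<And>x n. x \<in> {0..b} \<Longrightarrow> n < N \<Longrightarrow> \<bar>Pv b h x n\<bar> \<le> V"
      unfolding V_def \<nu>_def using vbound[OF h0 b] by blast
    have Db: "\<bar>DF sl N (Pv b Q x) (Pv b h x) k\<bar> \<le> 2 * Cf sl N * P * V" if "x \<in> {0..b}" "k < N" for x k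
      using DF_bound[OF that(2), of "Pv b h x" V "Pv b Q x" P] vb[OF that(1)] Pb[OF that(1)] by blast
    have Fb: "\<bar>Fnl sl N (Pv b h x) k\<bar> \<le> Cf sl N * V\<^sup>2" if "x \<in> {0..b}" "k < N" for x k
      using Fnl_bound[OF that(2), of "Pv b h x" V sl] vb[OF that(1)] by blast
    have \<nu>4: "\<nu>^4 \<le> \<nu>\<^sup>2"
    proof -
      have "\<nu>\<^sup>2 \<le> 1" using le1 \<nu>0 unfolding \<nu>_def by (simp add: power_le_one)
      then have "\<nu>\<^sup>2 * \<nu>\<^sup>2 \<le> 1 * \<nu>\<^sup>2" by (intro mult_right_mono) auto
      then show ?thesis by (simp add: power4_eq_xxxx power2_eq_square mult.assoc)
    qed
    let ?R1 = "\<lambda>x. (\<Sum>k<N. (d2 b (h k) x + DF sl N (Pv b Q x) (Pv b h x) k + Fnl sl N (Pv b h x) k)\<^sup>2) * wt lam x"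
    let ?R2 = "\<lambda>x. (\<Sum>k<N. 2 * Ac sl b N Q k x * Fnl sl N (Pv b h x) k) * wt lam x"
    have iR1: "?R1 integrable_on {0..b}" and iR2: "?R2 integrable_on {0..b}" using Rm_parts_int[OF b Q h] by auto
    have ig1: "(\<lambda>x. (\<Sum>k<N. 3 * (d2 b (h k) x)\<^sup>2) + C1 * \<nu>\<^sup>2) integrable_on {0..b}"
      using H2vec_facts(3)[OF h b] unfolding sqi_def
      by (intro integrable_add integrable_sum finite_lessThan intg_cmul) auto
    have R1le: "integral {0..b} ?R1 \<le> 3 * (\<nu>\<^sup>2) + b * C1 * \<nu>\<^sup>2"
    proof -
      have "integral {0..b} ?R1 \<le> integral {0..b} (\<lambda>x. (\<Sum>k<N. 3 * (d2 b (h k) x)\<^sup>2) + C1 * \<nu>\<^sup>2)"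
      proof (rule integral_le[OF iR1 ig1])
        fix x assume x: "x \<in> {0..b}"
        have w: "0 < wt lam x" "wt lam x \<le> 1" using wt_pos wt_le1[OF lam, of x] x by auto
        have "?R1 x \<le> (\<Sum>k<N. (d2 b (h k) x + DF sl N (Pv b Q x) (Pv b h x) k + Fnl sl N (Pv b h x) k)\<^sup>2)"
          using w by (intro mult_left_le) (auto intro: sum_nonneg)
        also have "\<dots> \<le> (\<Sum>k<N. 3 * (d2 b (h k) x)\<^sup>2 + 3 * (4 * (Cf sl N)\<^sup>2 * P\<^sup>2 * b + (Cf sl N)\<^sup>2 * b\<^sup>2) * \<nu>\<^sup>2)"
        proof (rule sum_mono)
          fix k assume "k \<in> {..<N}"
          then have k: "k < N" by simp
          have d: "(DF sl N (Pv b Q x) (Pv b h x) k)\<^sup>2 \<le> (2 * Cf sl N * P * V)\<^sup>2"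
            by (rule sq_le_of_abs[OF Db[OF x k]])
          have f: "(Fnl sl N (Pv b h x) k)\<^sup>2 \<le> (Cf sl N * V\<^sup>2)\<^sup>2"
            by (rule sq_le_of_abs[OF Fb[OF x k]])
          have e1: "(2 * Cf sl N * P * V)\<^sup>2 = 4 * (Cf sl N)\<^sup>2 * P\<^sup>2 * b * \<nu>\<^sup>2"
            using Vsq by (simp add: power_mult_distrib)
          have e2: "(Cf sl N * V\<^sup>2)\<^sup>2 = (Cf sl N)\<^sup>2 * b\<^sup>2 * \<nu>^4"
            using Vsq by (simp add: power_mult_distrib power4_eq_xxxx power2_eq_square)
          have c4: "(Cf sl N)\<^sup>2 * b\<^sup>2 * \<nu>^4 \<le> (Cf sl N)\<^sup>2 * b\<^sup>2 * \<nu>\<^sup>2"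
            using \<nu>4 by (intro mult_left_mono) auto
          have d': "(DF sl N (Pv b Q x) (Pv b h x) k)\<^sup>2 \<le> 4 * (Cf sl N)\<^sup>2 * P\<^sup>2 * b * \<nu>\<^sup>2"
            using d unfolding e1 .
          have f': "(Fnl sl N (Pv b h x) k)\<^sup>2 \<le> (Cf sl N)\<^sup>2 * b\<^sup>2 * \<nu>^4"
            using f unfolding e2 .
          have ex: "3 * (4 * (Cf sl N)\<^sup>2 * P\<^sup>2 * b + (Cf sl N)\<^sup>2 * b\<^sup>2) * \<nu>\<^sup>2
              = 3 * (4 * (Cf sl N)\<^sup>2 * P\<^sup>2 * b * \<nu>\<^sup>2) + 3 * ((Cf sl N)\<^sup>2 * b\<^sup>2 * \<nu>\<^sup>2)"
            by (simp add: algebra_simps)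
          show "(d2 b (h k) x + DF sl N (Pv b Q x) (Pv b h x) k + Fnl sl N (Pv b h x) k)\<^sup>2
              \<le> 3 * (d2 b (h k) x)\<^sup>2 + 3 * (4 * (Cf sl N)\<^sup>2 * P\<^sup>2 * b + (Cf sl N)\<^sup>2 * b\<^sup>2) * \<nu>\<^sup>2"
            unfolding ex
            using sq3[of "d2 b (h k) x" "DF sl N (Pv b Q x) (Pv b h x) k" "Fnl sl N (Pv b h x) k"] d' f' c4
            by linarith
        qed
        also have "\<dots> = (\<Sum>k<N. 3 * (d2 b (h k) x)\<^sup>2) + C1 * \<nu>\<^sup>2"
          unfolding C1_def by (simp add: sum.distrib algebra_simps)
        finally show "?R1 x \<le> (\<Sum>k<N. 3 * (d2 b (h k) x)\<^sup>2) + C1 * \<nu>\<^sup>2" .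
      qed
      also have "\<dots> = 3 * (\<Sum>n<N. Gn b (h n)) + b * C1 * \<nu>\<^sup>2"
      proof -
        have "integral {0..b} (\<lambda>x. (\<Sum>k<N. 3 * (d2 b (h k) x)\<^sup>2) + C1 * \<nu>\<^sup>2)
            = integral {0..b} (\<lambda>x. \<Sum>k<N. 3 * (d2 b (h k) x)\<^sup>2) + integral {0..b} (\<lambda>x. C1 * \<nu>\<^sup>2)"
          using H2vec_facts(3)[OF h b] unfolding sqi_def
          by (intro integral_add integrable_sum finite_lessThan intg_cmul) auto
        also have "integral {0..b} (\<lambda>x. \<Sum>k<N. 3 * (d2 b (h k) x)\<^sup>2) = (\<Sum>k<N. integral {0..b} (\<lambda>x. 3 * (d2 b (h k) x)\<^sup>2))"
          using H2vec_facts(3)[OF h b] unfolding sqi_def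
          by (intro integral_sum finite_lessThan intg_cmul) auto
        also have "\<dots> = 3 * (\<Sum>n<N. Gn b (h n))" unfolding Gn_def by (simp add: sum_distrib_left)
        finally show ?thesis using b by simp
      qed
      also have "\<dots> \<le> 3 * \<nu>\<^sup>2 + b * C1 * \<nu>\<^sup>2"
        using Gn_le_norm[OF h] b unfolding \<nu>_def by simp
      finally show ?thesis .
    qed
    have R1ge: "0 \<le> integral {0..b} ?R1"
      by (rule integral_nonneg[OF iR1]) (auto intro!: mult_nonneg_nonneg sum_nonneg less_imp_le[OF wt_pos])
    have R2le: "\<bar>integral {0..b} ?R2\<bar> \<le> Cf sl N * b * (\<Sum>k<N. b + AA k) * \<nu>\<^sup>2"
    proof -
      have ig2: "(\<lambda>x. \<Sum>k<N. (1 + (Ac sl b N Q k x)\<^sup>2) * (Cf sl N * V\<^sup>2)) integrable_on {0..b}"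
        using int_1A(1)[OF sqi_Ac[OF Q b]] b by (intro integrable_sum finite_lessThan) auto
      have "norm (integral {0..b} ?R2) \<le> integral {0..b} (\<lambda>x. \<Sum>k<N. (1 + (Ac sl b N Q k x)\<^sup>2) * (Cf sl N * V\<^sup>2))"
      proof (rule integral_norm_bound_integral[OF iR2 ig2])
        fix x assume x: "x \<in> {0..b}"
        have w: "0 < wt lam x" "wt lam x \<le> 1" using wt_pos wt_le1[OF lam, of x] x by auto
        have "norm (?R2 x) \<le> \<bar>\<Sum>k<N. 2 * Ac sl b N Q k x * Fnl sl N (Pv b h x) k\<bar>"
          using w by (simp add: abs_mult mult_left_le)
        also have "\<dots> \<le> (\<Sum>k<N. \<bar>2 * Ac sl b N Q k x * Fnl sl N (Pv b h x) k\<bar>)" by (rule sum_abs)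
        also have "\<dots> \<le> (\<Sum>k<N. (1 + (Ac sl b N Q k x)\<^sup>2) * (Cf sl N * V\<^sup>2))"
        proof (rule sum_mono)
          fix k assume "k \<in> {..<N}"
          then have k: "k < N" by simp
          have "\<bar>2 * Ac sl b N Q k x * Fnl sl N (Pv b h x) k\<bar> = (2 * \<bar>Ac sl b N Q k x\<bar>) * \<bar>Fnl sl N (Pv b h x) k\<bar>"
            by (simp add: abs_mult)
          also have "\<dots> \<le> (1 + (Ac sl b N Q k x)\<^sup>2) * (Cf sl N * V\<^sup>2)"
            using absA[of "Ac sl b N Q k x"] Fb[OF x k]
            by (intro mult_mono) (auto intro: order_trans[OF abs_ge_zero])
          finally show "\<bar>2 * Ac sl b N Q k x * Fnl sl N (Pv b h x) k\<bar> \<le> (1 + (Ac sl b N Q k x)\<^sup>2) * (Cf sl N * V\<^sup>2)" .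
        qed
        finally show "norm (?R2 x) \<le> (\<Sum>k<N. (1 + (Ac sl b N Q k x)\<^sup>2) * (Cf sl N * V\<^sup>2))" .
      qed
      also have "\<dots> = (\<Sum>k<N. integral {0..b} (\<lambda>x. (1 + (Ac sl b N Q k x)\<^sup>2) * (Cf sl N * V\<^sup>2)))"
        using int_1A(1)[OF sqi_Ac[OF Q b]] b by (intro integral_sum finite_lessThan) auto
      also have "\<dots> = (\<Sum>k<N. (Cf sl N * V\<^sup>2) * (b + AA k))"
        using int_1A(2)[OF sqi_Ac[OF Q b]] b unfolding AA_def by (intro sum.cong refl) auto
      also have "\<dots> = Cf sl N * b * (\<Sum>k<N. b + AA k) * \<nu>\<^sup>2"
        unfolding Vsq by (simp add: sum_distrib_left algebra_simps)
      finally show ?thesis by simp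
    qed
    have "\<bar>Rm sl b N lam Q h\<bar> \<le> \<bar>integral {0..b} ?R1\<bar> + \<bar>integral {0..b} ?R2\<bar>"
      unfolding Rm_def by (rule abs_triangle_ineq)
    also have "\<dots> \<le> (3 * \<nu>\<^sup>2 + b * C1 * \<nu>\<^sup>2) + Cf sl N * b * (\<Sum>k<N. b + AA k) * \<nu>\<^sup>2"
      using R1le R1ge R2le by linarith
    also have "\<dots> = K * \<nu>\<^sup>2" unfolding K_def by (simp add: algebra_simps)
    finally show "\<bar>Rm sl b N lam Q h\<bar> \<le> K * (H2norm b N h)\<^sup>2" unfolding \<nu>_def .
  qed
qed



lemma H0_H2: "H0vec b N h \<Longrightarrow> H2vec b N h" unfolding H0vec_def by auto

lemma frechet_Lm:
  assumes b: "0 < b" and lam: "0 \<le> lam" and Q: "H2vec b N Q"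
  shows "frechet_H0 b N (Jbar sl b N lam) Q (Lm sl b N lam Q)"
  unfolding frechet_H0_def
proof (intro conjI allI impI)
  fix h1 h2 a c assume "H0vec b N h1" "H0vec b N h2"
  then show "Lm sl b N lam Q (\<lambda>n x. a * h1 n x + c * h2 n x) = a * Lm sl b N lam Q h1 + c * Lm sl b N lam Q h2"
    using Lm_lin[OF b Q] H0_H2 by blast
next
  show "\<exists>K. \<forall>h. H0vec b N h \<longrightarrow> \<bar>Lm sl b N lam Q h\<bar> \<le> K * H2norm b N h"
    by (rule Lm_bound[OF b lam Q])
next
  fix \<epsilon> :: real assume e: "0 < \<epsilon>"
  obtain K where K: "\<And>h. H0vec b N h \<Longrightarrow> H2norm b N h \<le> 1 \<Longrightarrow> \<bar>Rm sl b N lam Q h\<bar> \<le> K * (H2norm b N h)\<^sup>2"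
    using Rm_bound[OF b lam Q, of sl] by blast
  define K' where "K' = max K 0"
  define \<delta> where "\<delta> = min 1 (\<epsilon> / (K' + 1))"
  have K'0: "0 \<le> K'" unfolding K'_def by simp
  have d0: "0 < \<delta>" unfolding \<delta>_def using e K'0 by simp
  show "\<exists>\<delta>>0. \<forall>h. H0vec b N h \<longrightarrow> H2norm b N h < \<delta> \<longrightarrow>
        \<bar>Jbar sl b N lam (vadd Q h) - Jbar sl b N lam Q - Lm sl b N lam Q h\<bar> \<le> \<epsilon> * H2norm b N h"
  proof (intro exI[of _ \<delta>] conjI allI impI)
    show "0 < \<delta>" by (rule d0)
  next
    fix h assume h: "H0vec b N h" and hd: "H2norm b N h < \<delta>"
    define \<nu> where "\<nu> = H2norm b N h"
    have \<nu>0: "0 \<le> \<nu>" unfolding \<nu>_def using H2norm_nonneg[OF H0_H2[OF h]] b by auto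
    have \<nu>1: "\<nu> \<le> 1" using hd unfolding \<nu>_def \<delta>_def by simp
    have \<nu>e: "\<nu> \<le> \<epsilon> / (K' + 1)" using hd unfolding \<nu>_def \<delta>_def by simp
    have "\<bar>Jbar sl b N lam (vadd Q h) - Jbar sl b N lam Q - Lm sl b N lam Q h\<bar> = \<bar>Rm sl b N lam Q h\<bar>"
      using expand[OF b Q H0_H2[OF h]] by simp
    also have "\<dots> \<le> K * \<nu>\<^sup>2" using K[OF h] \<nu>1 unfolding \<nu>_def by simp
    also have "\<dots> \<le> K' * \<nu>\<^sup>2" unfolding K'_def by (intro mult_right_mono) auto
    also have "\<dots> = (K' * \<nu>) * \<nu>" by (simp add: power2_eq_square)
    also have "\<dots> \<le> \<epsilon> * \<nu>"
    proof (rule mult_right_mono[OF _ \<nu>0])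
      have "K' * \<nu> \<le> K' * (\<epsilon> / (K' + 1))" using \<nu>e K'0 by (rule mult_left_mono)
      also have "\<dots> \<le> \<epsilon>" using K'0 e by (simp add: field_simps)
      finally show "K' * \<nu> \<le> \<epsilon>" .
    qed
    finally show "\<bar>Jbar sl b N lam (vadd Q h) - Jbar sl b N lam Q - Lm sl b N lam Q h\<bar> \<le> \<epsilon> * H2norm b N h"
      unfolding \<nu>_def .
  qed
qed

lemma frechet_unique:
  assumes b: "0 < b" and L1: "frechet_H0 b N J Q L1" and L2: "frechet_H0 b N J Q L2" and h: "H0vec b N h"
  shows "L1 h = L2 h"
proof -
  have hv: "H2vec b N h" using H0_H2[OF h] .
  define \<nu> where "\<nu> = H2norm b N h"
  have \<nu>0: "0 \<le> \<nu>" unfolding \<nu>_def using H2norm_nonneg[OF hv] b by auto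
  have scale: "L (\<lambda>n x. t * h n x) = t * L h" if L: "frechet_H0 b N J Q L" for L t
  proof -
    have "L (\<lambda>n x. t * h n x + 0 * h n x) = t * L h + 0 * L h"
      using L h unfolding frechet_H0_def by blast
    then show ?thesis by simp
  qed
  show ?thesis
  proof (cases "\<nu> = 0")
    case True
    have z: "L h = 0" if L: "frechet_H0 b N J Q L" for L
    proof -
      obtain K where "\<And>h. H0vec b N h \<Longrightarrow> \<bar>L h\<bar> \<le> K * H2norm b N h"
        using L unfolding frechet_H0_def by blast
      from this[OF h] True show ?thesis unfolding \<nu>_def by simp
    qed
    show ?thesis using z[OF L1] z[OF L2] by simp
  next
    case False
    then have \<nu>p: "0 < \<nu>" using \<nu>0 by simp
    show ?thesis
    proof (rule ccontr)
      assume ne: "L1 h \<noteq> L2 h"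
      define d where "d = \<bar>L1 h - L2 h\<bar>"
      have dp: "0 < d" unfolding d_def using ne by simp
      define \<epsilon> where "\<epsilon> = d / (4 * \<nu>)"
      have ep: "0 < \<epsilon>" unfolding \<epsilon>_def using dp \<nu>p by simp
      obtain \<delta>1 where d1: "\<delta>1 > 0" and D1: "\<And>h. H0vec b N h \<Longrightarrow> H2norm b N h < \<delta>1 \<Longrightarrow>
          \<bar>J (vadd Q h) - J Q - L1 h\<bar> \<le> \<epsilon> * H2norm b N h"
        using L1 ep unfolding frechet_H0_def by meson
      obtain \<delta>2 where d2: "\<delta>2 > 0" and D2: "\<And>h. H0vec b N h \<Longrightarrow> H2norm b N h < \<delta>2 \<Longrightarrow>
          \<bar>J (vadd Q h) - J Q - L2 h\<bar> \<le> \<epsilon> * H2norm b N h"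
        using L2 ep unfolding frechet_H0_def by meson
      define t where "t = min \<delta>1 \<delta>2 / (2 * \<nu>)"
      have tp: "0 < t" unfolding t_def using d1 d2 \<nu>p by simp
      let ?th = "\<lambda>n x. t * h n x"
      have th0: "H0vec b N ?th" using H0_lin[OF b h h, of t 0] by simp
      have thn: "H2norm b N ?th = t * \<nu>" unfolding \<nu>_def using H2norm_scale[OF hv b, of t] tp by simp
      have tnu: "t * \<nu> = min \<delta>1 \<delta>2 / 2" unfolding t_def using \<nu>p by simp
      have "t * \<nu> < \<delta>1" "t * \<nu> < \<delta>2" unfolding tnu using d1 d2 by auto
      then have a1: "\<bar>J (vadd Q ?th) - J Q - t * L1 h\<bar> \<le> \<epsilon> * (t * \<nu>)"
        and a2: "\<bar>J (vadd Q ?th) - J Q - t * L2 h\<bar> \<le> \<epsilon> * (t * \<nu>)"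
        using D1[OF th0] D2[OF th0] scale[OF L1, of t] scale[OF L2, of t] thn by auto
      have "t * d = \<bar>t * (L1 h - L2 h)\<bar>" unfolding d_def using tp by (simp add: abs_mult)
      also have "\<dots> = \<bar>(J (vadd Q ?th) - J Q - t * L2 h) - (J (vadd Q ?th) - J Q - t * L1 h)\<bar>"
        by (simp add: algebra_simps)
      also have "\<dots> \<le> 2 * (\<epsilon> * (t * \<nu>))" using a1 a2 by linarith
      also have "\<dots> = t * (d / 2)" unfolding \<epsilon>_def using \<nu>p by (simp add: field_simps)
      finally have "t * d \<le> t * (d / 2)" .
      then have "d \<le> d / 2" using tp by simp
      then show False using dp by simp
    qed
  qed
qed



lemma G1_H2vec: "Q \<in> G1 b N R Phi0 Psi0 Psib \<Longrightarrow> H2vec b N Q" unfolding G1_def by auto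

lemma G1_Gn: assumes "Q \<in> G1 b N R Phi0 Psi0 Psib" "0 < b" "m < N"
  shows "Gn b (Q m) \<le> R\<^sup>2"
proof -
  have Q: "H2vec b N Q" using G1_H2vec[OF assms(1)] .
  have "Gn b (Q m) \<le> (H2norm b N Q)\<^sup>2"
    using Gn_le_sum[OF Q _ assms(3)] Gn_le_norm[OF Q] assms(2) by force
  also have "\<dots> \<le> R\<^sup>2" using assms(1) H2norm_nonneg[OF Q] assms(2) unfolding G1_def
    by (intro power_mono) auto
  finally show ?thesis .
qed

lemma G1_Pbound:
  assumes Q: "Q \<in> G1 b N R Phi0 Psi0 Psib" and b: "0 < b" and R: "0 < R" and x: "x \<in> {0..b}" and m: "m < N"
  shows "\<bar>Pv b Q x m\<bar> \<le> (\<Sum>m<N. \<bar>Psi0 m\<bar>) + sqrt b * R"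
proof -
  have Qv: "H2vec b N Q" using G1_H2vec[OF Q] .
  have "(d1 b (Q m) x - d1 b (Q m) 0)\<^sup>2 \<le> b * Gn b (Q m)"
    using d1_bound0[OF H2vec_facts(2)[OF Qv b m] x] unfolding Gn_def .
  also have "\<dots> \<le> b * R\<^sup>2" using G1_Gn[OF Q b m] b by simp
  finally have "sqrt ((d1 b (Q m) x - d1 b (Q m) 0)\<^sup>2) \<le> sqrt (b * R\<^sup>2)" by (rule real_sqrt_le_mono)
  then have a: "\<bar>d1 b (Q m) x - d1 b (Q m) 0\<bar> \<le> sqrt b * R" using R b by (simp add: real_sqrt_mult)
  have "\<bar>Psi0 m\<bar> \<le> (\<Sum>m<N. \<bar>Psi0 m\<bar>)" using m by (intro member_le_sum) auto
  moreover have "d1 b (Q m) 0 = Psi0 m" using Q m unfolding G1_def by auto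
  ultimately show ?thesis unfolding Pv_def using a by linarith
qed

lemma vdiff_eq: "vdiff Q2 Q1 n = (\<lambda>x. 1 * Q2 n x + (-1) * Q1 n x)"
  unfolding vdiff_def by auto

lemma vdiff_H0:
  assumes Q1: "Q1 \<in> G1 b N R Phi0 Psi0 Psib" and Q2: "Q2 \<in> G1 b N R Phi0 Psi0 Psib" and b: "0 < b"
  shows "H0vec b N (vdiff Q2 Q1)"
    "\<And>x m. x \<in> {0..b} \<Longrightarrow> m < N \<Longrightarrow> Pv b (vdiff Q2 Q1) x m = Pv b Q2 x m - Pv b Q1 x m"
proof -
  have v1: "H2vec b N Q1" and v2: "H2vec b N Q2" using G1_H2vec Q1 Q2 by auto
  show "\<And>x m. x \<in> {0..b} \<Longrightarrow> m < N \<Longrightarrow> Pv b (vdiff Q2 Q1) x m = Pv b Q2 x m - Pv b Q1 x m"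
  proof -
    fix x m assume x: "x \<in> {0..b}" and m: "m < N"
    have "d1 b (\<lambda>x. 1 * Q2 m x + (-1) * Q1 m x) x = 1 * d1 b (Q2 m) x + (-1) * d1 b (Q1 m) x"
      by (rule d1_lin(2)[OF H2vec_facts(1)[OF v2 b m] H2vec_facts(1)[OF v1 b m] b x])
    then show "Pv b (vdiff Q2 Q1) x m = Pv b Q2 x m - Pv b Q1 x m"
      unfolding Pv_def vdiff_eq by simp
  qed
  show "H0vec b N (vdiff Q2 Q1)"
    unfolding H0vec_def H2vec_def
  proof (intro conjI allI impI)
    fix n assume n: "n < N"
    show "H2 b (vdiff Q2 Q1 n)" unfolding vdiff_eq
      by (rule H2_lin(1)[OF H2vec_facts(1)[OF v2 b n] H2vec_facts(1)[OF v1 b n] b])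
    show "vdiff Q2 Q1 n 0 = 0" using Q1 Q2 n unfolding G1_def vdiff_def by auto
    show "d1 b (vdiff Q2 Q1 n) 0 = 0" unfolding vdiff_eq
      using d1_lin(2)[OF H2vec_facts(1)[OF v2 b n] H2vec_facts(1)[OF v1 b n] b, of 0 1 "-1"] Q1 Q2 n b
      unfolding G1_def by simp
    show "d1 b (vdiff Q2 Q1 n) b = 0" unfolding vdiff_eq
      using d1_lin(2)[OF H2vec_facts(1)[OF v2 b n] H2vec_facts(1)[OF v1 b n] b, of b 1 "-1"] Q1 Q2 n b
      unfolding G1_def by simp
  next
    fix n assume n: "N \<le> n"
    show "vdiff Q2 Q1 n = (\<lambda>x. 0)" using v1 v2 n unfolding H2vec_def vdiff_def by auto
  qed
qed

lemma vadd_vdiff: "vadd Q1 (vdiff Q2 Q1) = Q2"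
  unfolding vadd_def vdiff_def by auto

lemma G1_AA:
  assumes Q: "Q \<in> G1 b N R Phi0 Psi0 Psib" and b: "0 < b" and R: "0 < R" and k: "k < N"
  shows "integral {0..b} (\<lambda>x. (Ac sl b N Q k x)\<^sup>2)
     \<le> 2 * R\<^sup>2 + 2 * b * (Cf sl N * ((\<Sum>m<N. \<bar>Psi0 m\<bar>) + sqrt b * R)\<^sup>2)\<^sup>2"
proof -
  let ?P = "(\<Sum>m<N. \<bar>Psi0 m\<bar>) + sqrt b * R"
  have Qv: "H2vec b N Q" using G1_H2vec[OF Q] .
  have sH: "sqi b (d2 b (Q k))" using H2vec_facts(3)[OF Qv b k] .
  have sF: "sqi b (\<lambda>x. Fnl sl N (Pv b Q x) k)" using sqi_Fnl[OF Qv b] .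
  have iA: "(\<lambda>x. (Ac sl b N Q k x)\<^sup>2) integrable_on {0..b}" using sqi_Ac[OF Qv b k] unfolding sqi_def by auto
  have ib: "(\<lambda>x. 2 * (d2 b (Q k) x)\<^sup>2 + 2 * (Cf sl N * ?P\<^sup>2)\<^sup>2) integrable_on {0..b}"
    using sH unfolding sqi_def by (intro integrable_add intg_cmul) auto
  have "integral {0..b} (\<lambda>x. (Ac sl b N Q k x)\<^sup>2) \<le> integral {0..b} (\<lambda>x. 2 * (d2 b (Q k) x)\<^sup>2 + 2 * (Cf sl N * ?P\<^sup>2)\<^sup>2)"
  proof (rule integral_le[OF iA ib])
    fix x assume x: "x \<in> {0..b}"
    have "\<bar>Fnl sl N (Pv b Q x) k\<bar> \<le> Cf sl N * ?P\<^sup>2"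
      by (rule Fnl_bound[OF k]) (use G1_Pbound[OF Q b R x] in auto)
    then have f: "(Fnl sl N (Pv b Q x) k)\<^sup>2 \<le> (Cf sl N * ?P\<^sup>2)\<^sup>2" by (rule sq_le_of_abs)
    have "0 \<le> (d2 b (Q k) x - Fnl sl N (Pv b Q x) k)\<^sup>2" by simp
    then have "(Ac sl b N Q k x)\<^sup>2 \<le> 2 * (d2 b (Q k) x)\<^sup>2 + 2 * (Fnl sl N (Pv b Q x) k)\<^sup>2"
      unfolding Ac_def by (simp add: power2_eq_square algebra_simps)
    then show "(Ac sl b N Q k x)\<^sup>2 \<le> 2 * (d2 b (Q k) x)\<^sup>2 + 2 * (Cf sl N * ?P\<^sup>2)\<^sup>2" using f by linarith
  qed
  also have "\<dots> = 2 * Gn b (Q k) + b * (2 * (Cf sl N * ?P\<^sup>2)\<^sup>2)"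
  proof -
    have "integral {0..b} (\<lambda>x. 2 * (d2 b (Q k) x)\<^sup>2 + 2 * (Cf sl N * ?P\<^sup>2)\<^sup>2)
       = integral {0..b} (\<lambda>x. 2 * (d2 b (Q k) x)\<^sup>2) + integral {0..b} (\<lambda>x. 2 * (Cf sl N * ?P\<^sup>2)\<^sup>2)"
      using sH unfolding sqi_def by (intro integral_add intg_cmul) auto
    then show ?thesis using b unfolding Gn_def by simp
  qed
  also have "\<dots> \<le> 2 * R\<^sup>2 + 2 * b * (Cf sl N * ?P\<^sup>2)\<^sup>2" using G1_Gn[OF Q b k] by simp
  finally show ?thesis .
qed



lemma sq_half: "(a::real)\<^sup>2 / 2 - c\<^sup>2 \<le> (a + c)\<^sup>2"
proof -
  have "0 \<le> (a + 2 * c)\<^sup>2" by simp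
  then show ?thesis by (simp add: power2_eq_square algebra_simps)
qed

lemma wt_ge: "0 \<le> lam \<Longrightarrow> x \<le> b \<Longrightarrow> exp (- 2 * lam * b) \<le> wt lam x"
proof -
  assume a: "0 \<le> lam" "x \<le> b"
  have "exp (- 2 * lam * b) = (exp (- lam * b))\<^sup>2" using exp_double[of "- lam * b"] by (simp add: mult.assoc)
  also have "\<dots> \<le> (exp (- lam * x))\<^sup>2" using a by (intro power_mono) (auto simp: mult_left_mono)
  finally show ?thesis unfolding wt_def .
qed

lemma Rm_lower:
  fixes N :: nat
  assumes b: "0 < b" and R: "0 < R" and Q1: "Q1 \<in> G1 b N R Phi0 Psi0 Psib" and Q2: "Q2 \<in> G1 b N R Phi0 Psi0 Psib"
    and lam: "0 < lam"
    and P_def: "P = (\<Sum>m<N. \<bar>Psi0 m\<bar>) + sqrt b * R"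
    and Abd_def: "Abd = 2 * R\<^sup>2 + 2 * b * (Cf sl N * P\<^sup>2)\<^sup>2"
    and \<beta>_def: "\<beta> = ((2 + 2 * real N) * Cf sl N * P)\<^sup>2 * (real N)\<^sup>2"
    and K_def: "K = (real N * b * \<beta> + Cf sl N * (real N)^3 * (b + Abd)) / 2"
  shows "Rm sl b N lam Q1 (vdiff Q2 Q1)
     \<ge> (\<Sum>n<N. integral {0..b} (\<lambda>x. (d2 b (vdiff Q2 Q1 n) x)\<^sup>2 * wt lam x)) / 2
       - K * (\<Sum>n<N. integral {0..b} (\<lambda>x. (d2 b (vdiff Q2 Q1 n) x)\<^sup>2 * wt lam x)) / lam"
proof -
  define h where "h = vdiff Q2 Q1"
  have h0: "H0vec b N h" unfolding h_def using vdiff_H0(1)[OF Q1 Q2 b] .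
  have hv: "H2vec b N h" using H0_H2[OF h0] .
  have v1: "H2vec b N Q1" using G1_H2vec[OF Q1] .
  define Sw where "Sw = (\<Sum>n<N. integral {0..b} (\<lambda>x. (d2 b (h n) x)\<^sup>2 * wt lam x))"
  have Sn: "\<And>n. n < N \<Longrightarrow> integral {0..b} (\<lambda>x. (d2 b (h n) x)\<^sup>2 * wt lam x) \<le> Sw"
    unfolding Sw_def by (intro member_le_sum sqw_nonneg H2vec_facts(3)[OF hv b]) auto
  have Sw0: "0 \<le> Sw" unfolding Sw_def by (intro sum_nonneg sqw_nonneg H2vec_facts(3)[OF hv b]) auto
  define \<sigma>2 where "\<sigma>2 = Sw / (2 * lam)"
  have \<sigma>0: "0 \<le> \<sigma>2" unfolding \<sigma>2_def using Sw0 lam by simp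
  have P0: "0 \<le> P" unfolding P_def using b R by (auto intro!: add_nonneg_nonneg sum_nonneg)
  have Cf0: "0 \<le> Cf sl N" by (rule Cf_nonneg)
  have \<beta>0: "0 \<le> \<beta>" unfolding \<beta>_def by simp
  have Pb: "\<And>Q x m. Q \<in> G1 b N R Phi0 Psi0 Psib \<Longrightarrow> x \<in> {0..b} \<Longrightarrow> m < N \<Longrightarrow> \<bar>Pv b Q x m\<bar> \<le> P"
    unfolding P_def using G1_Pbound[OF _ b R] by blast
  define c where "c = Cf sl N * (real N)\<^sup>2 * \<sigma>2"
  have c0: "0 \<le> c" unfolding c_def using Cf0 \<sigma>0 by simp
  let ?A = "\<lambda>k. Ac sl b N Q1 k"
  let ?H = "\<lambda>k. d2 b (h k)"
  let ?g = "\<lambda>x. \<Sum>k<N. (1/2) * ((?H k x)\<^sup>2 * wt lam x) - ((1 + (?A k x)\<^sup>2) * c + \<beta> * \<sigma>2)"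
  let ?R1 = "\<lambda>x. (\<Sum>k<N. (d2 b (h k) x + DF sl N (Pv b Q1 x) (Pv b h x) k + Fnl sl N (Pv b h x) k)\<^sup>2) * wt lam x"
  let ?R2 = "\<lambda>x. (\<Sum>k<N. 2 * Ac sl b N Q1 k x * Fnl sl N (Pv b h x) k) * wt lam x"
  have iR1: "?R1 integrable_on {0..b}" and iR2: "?R2 integrable_on {0..b}" using Rm_parts_int[OF b v1 hv] by auto
  have ig: "?g integrable_on {0..b}"
  proof (intro integrable_sum finite_lessThan integrable_diff integrable_add intg_cmul)
    fix k assume k: "k \<in> {..<N}"
    show "(\<lambda>x. (?H k x)\<^sup>2 * wt lam x) integrable_on {0..b}" by (rule sqw_int[OF H2vec_facts(3)[OF hv b]]) (use k in auto)
    show "(\<lambda>x. (1 + (?A k x)\<^sup>2) * c) integrable_on {0..b}" using int_1A(1)[OF sqi_Ac[OF v1 b]] k b by auto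
  qed auto
  have pw: "?g x \<le> ?R1 x + ?R2 x" if x: "x \<in> {0..b}" for x
  proof -
    define v where "v = Pv b h x"
    define V where "V = (\<Sum>n<N. \<bar>v n\<bar>)"
    define e where "e = exp (- lam * x)"
    have e0: "0 < e" unfolding e_def by simp
    have we: "wt lam x = e\<^sup>2" unfolding wt_def e_def ..
    have vn: "\<bar>v n\<bar> \<le> V" if "n < N" for n unfolding V_def using that by (intro member_le_sum) auto
    have V0: "0 \<le> V" unfolding V_def by (simp add: sum_nonneg)
    have v2P: "\<bar>v n\<bar> \<le> 2 * P" if n: "n < N" for n
    proof -
      have "v n = Pv b Q2 x n - Pv b Q1 x n" unfolding v_def h_def using vdiff_H0(2)[OF Q1 Q2 b x n] .
      then show ?thesis using Pb[OF Q1 x n] Pb[OF Q2 x n] by linarith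
    qed
    have V2: "V \<le> real N * (2 * P)" unfolding V_def using sum_bounded_above[of "{..<N}" "\<lambda>n. \<bar>v n\<bar>" "2 * P"] v2P by auto
    have ve: "\<bar>v n\<bar> * e \<le> sqrt \<sigma>2" if n: "n < N" for n
    proof -
      have "(d1 b (h n) x - d1 b (h n) 0)\<^sup>2 * wt lam x \<le> integral {0..b} (\<lambda>t. (d2 b (h n) t)\<^sup>2 * wt lam t) / (2 * lam)"
        by (rule d1_bound_w[OF H2vec_facts(2)[OF hv b n] x lam])
      also have "\<dots> \<le> \<sigma>2" unfolding \<sigma>2_def using Sn[OF n] lam by (simp add: divide_right_mono)
      finally have "(v n * e)\<^sup>2 \<le> \<sigma>2" using h0 n unfolding H0vec_def v_def Pv_def we by (simp add: power_mult_distrib)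
      then have "sqrt ((v n * e)\<^sup>2) \<le> sqrt \<sigma>2" by (rule real_sqrt_le_mono)
      then show ?thesis using e0 by (simp add: abs_mult)
    qed
    have Ve: "V * e \<le> real N * sqrt \<sigma>2"
    proof -
      have "V * e = (\<Sum>n<N. \<bar>v n\<bar> * e)" unfolding V_def by (simp add: sum_distrib_right)
      also have "\<dots> \<le> (\<Sum>n<N. sqrt \<sigma>2)" using ve by (intro sum_mono) auto
      finally show ?thesis by simp
    qed
    have V2w: "V\<^sup>2 * wt lam x \<le> (real N)\<^sup>2 * \<sigma>2"
    proof -
      have "V\<^sup>2 * wt lam x = (V * e)\<^sup>2" unfolding we by (simp add: power_mult_distrib)
      also have "\<dots> \<le> (real N * sqrt \<sigma>2)\<^sup>2" using Ve V0 e0 by (intro power_mono) auto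
      also have "\<dots> = (real N)\<^sup>2 * \<sigma>2" using \<sigma>0 by (simp add: power_mult_distrib)
      finally show ?thesis .
    qed
    have w0: "0 \<le> wt lam x" using wt_pos[of lam x] by simp
    have tm: "(1/2) * ((?H k x)\<^sup>2 * wt lam x) - ((1 + (?A k x)\<^sup>2) * c + \<beta> * \<sigma>2)
        \<le> (d2 b (h k) x + DF sl N (Pv b Q1 x) (Pv b h x) k + Fnl sl N (Pv b h x) k)\<^sup>2 * wt lam x
          + 2 * Ac sl b N Q1 k x * Fnl sl N (Pv b h x) k * wt lam x" if k: "k < N" for k
    proof -
      define D where "D = DF sl N (Pv b Q1 x) v k"
      define F where "F = Fnl sl N v k"
      have Db: "\<bar>D\<bar> \<le> 2 * Cf sl N * P * V" unfolding D_def
        by (rule DF_bound[OF k]) (use vn Pb[OF Q1 x] in auto)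
      have Fb: "\<bar>F\<bar> \<le> Cf sl N * V\<^sup>2" unfolding F_def by (rule Fnl_bound[OF k vn])
      have Fb2: "Cf sl N * V\<^sup>2 \<le> Cf sl N * (real N * (2 * P)) * V"
      proof -
        have "V * V \<le> (real N * (2 * P)) * V" by (rule mult_right_mono[OF V2 V0])
        then have "Cf sl N * (V * V) \<le> Cf sl N * ((real N * (2 * P)) * V)" by (rule mult_left_mono[OF _ Cf0])
        then show ?thesis by (simp add: power2_eq_square mult.assoc)
      qed
      have Bb: "\<bar>D + F\<bar> \<le> (2 + 2 * real N) * Cf sl N * P * V"
        using abs_triangle_ineq[of D F] Db Fb Fb2 by (simp add: algebra_simps)
      have B2: "(D + F)\<^sup>2 * wt lam x \<le> \<beta> * \<sigma>2"
      proof -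
        have "(D + F)\<^sup>2 \<le> ((2 + 2 * real N) * Cf sl N * P * V)\<^sup>2" by (rule sq_le_of_abs[OF Bb])
        then have "(D + F)\<^sup>2 * wt lam x \<le> ((2 + 2 * real N) * Cf sl N * P * V)\<^sup>2 * wt lam x"
          using w0 by (rule mult_right_mono)
        also have "\<dots> = ((2 + 2 * real N) * Cf sl N * P)\<^sup>2 * (V\<^sup>2 * wt lam x)"
          by (simp add: power_mult_distrib mult.assoc)
        finally have "(D + F)\<^sup>2 * wt lam x \<le> ((2 + 2 * real N) * Cf sl N * P)\<^sup>2 * (V\<^sup>2 * wt lam x)" .
        also have "\<dots> \<le> ((2 + 2 * real N) * Cf sl N * P)\<^sup>2 * ((real N)\<^sup>2 * \<sigma>2)"
          by (intro mult_left_mono V2w) simp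
        finally show ?thesis unfolding \<beta>_def by (simp add: mult.assoc)
      qed
      have T1: "(?H k x)\<^sup>2 / 2 * wt lam x - (D + F)\<^sup>2 * wt lam x \<le> (?H k x + (D + F))\<^sup>2 * wt lam x"
        using mult_right_mono[OF sq_half[of "?H k x" "D + F"] w0] by (simp add: algebra_simps)
      have T2: "- ((1 + (?A k x)\<^sup>2) * c) \<le> 2 * ?A k x * F * wt lam x"
      proof -
        have "\<bar>2 * ?A k x * F * wt lam x\<bar> = (2 * \<bar>?A k x\<bar>) * (\<bar>F\<bar> * wt lam x)" using w0 by (simp add: abs_mult)
        also have "\<dots> \<le> (1 + (?A k x)\<^sup>2) * (Cf sl N * (V\<^sup>2 * wt lam x))"
        proof (rule mult_mono)
          show "2 * \<bar>?A k x\<bar> \<le> 1 + (?A k x)\<^sup>2" using absA[of "?A k x"] by simp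
          show "\<bar>F\<bar> * wt lam x \<le> Cf sl N * (V\<^sup>2 * wt lam x)"
            using mult_right_mono[OF Fb w0] by (simp add: mult.assoc)
        qed (use w0 in auto)
        also have "\<dots> \<le> (1 + (?A k x)\<^sup>2) * c"
          unfolding c_def using V2w Cf0 by (intro mult_left_mono) (auto simp: mult.assoc intro: mult_left_mono)
        finally show ?thesis by linarith
      qed
      have "DF sl N (Pv b Q1 x) (Pv b h x) k = D" "Fnl sl N (Pv b h x) k = F" unfolding D_def F_def v_def by auto
      then show ?thesis using T1 T2 B2 by (simp add: algebra_simps)
    qed
    have "?g x \<le> (\<Sum>k<N. (d2 b (h k) x + DF sl N (Pv b Q1 x) (Pv b h x) k + Fnl sl N (Pv b h x) k)\<^sup>2 * wt lam x
          + 2 * Ac sl b N Q1 k x * Fnl sl N (Pv b h x) k * wt lam x)"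
      using tm by (intro sum_mono) auto
    also have "\<dots> = ?R1 x + ?R2 x" by (simp add: sum.distrib sum_distrib_right)
    finally show ?thesis .
  qed
  have "integral {0..b} ?g \<le> integral {0..b} (\<lambda>x. ?R1 x + ?R2 x)"
    using pw by (intro integral_le ig integrable_add iR1 iR2) auto
  also have "\<dots> = Rm sl b N lam Q1 h" unfolding Rm_def using iR1 iR2 by (simp add: integral_add)
  finally have low: "integral {0..b} ?g \<le> Rm sl b N lam Q1 h" .
  have gint: "integral {0..b} ?g = (\<Sum>k<N. (1/2) * integral {0..b} (\<lambda>x. (?H k x)\<^sup>2 * wt lam x)
      - (c * (b + integral {0..b} (\<lambda>x. (?A k x)\<^sup>2)) + b * (\<beta> * \<sigma>2)))"
  proof -
    have "integral {0..b} ?g = (\<Sum>k<N. integral {0..b} (\<lambda>x. (1/2) * ((?H k x)\<^sup>2 * wt lam x) - ((1 + (?A k x)\<^sup>2) * c + \<beta> * \<sigma>2)))"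
    proof (rule integral_sum)
      fix k assume k: "k \<in> {..<N}"
      show "(\<lambda>x. (1/2) * ((?H k x)\<^sup>2 * wt lam x) - ((1 + (?A k x)\<^sup>2) * c + \<beta> * \<sigma>2)) integrable_on {0..b}"
        using sqw_int[OF H2vec_facts(3)[OF hv b]] int_1A(1)[OF sqi_Ac[OF v1 b]] k b
        by (intro integrable_diff integrable_add intg_cmul) auto
    qed auto
    also have "\<dots> = (\<Sum>k<N. (1/2) * integral {0..b} (\<lambda>x. (?H k x)\<^sup>2 * wt lam x)
      - (c * (b + integral {0..b} (\<lambda>x. (?A k x)\<^sup>2)) + b * (\<beta> * \<sigma>2)))"
    proof (rule sum.cong[OF refl])
      fix k assume k: "k \<in> {..<N}"
      have i1: "(\<lambda>x. (?H k x)\<^sup>2 * wt lam x) integrable_on {0..b}" using sqw_int[OF H2vec_facts(3)[OF hv b]] k by auto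
      have i2: "(\<lambda>x. (1 + (?A k x)\<^sup>2) * c) integrable_on {0..b}" using int_1A(1)[OF sqi_Ac[OF v1 b]] k b by auto
      have e2: "integral {0..b} (\<lambda>x. (1 + (?A k x)\<^sup>2) * c) = c * (b + integral {0..b} (\<lambda>x. (?A k x)\<^sup>2))"
        using int_1A(2)[OF sqi_Ac[OF v1 b]] k b by auto
      have "integral {0..b} (\<lambda>x. (1/2) * ((?H k x)\<^sup>2 * wt lam x) - ((1 + (?A k x)\<^sup>2) * c + \<beta> * \<sigma>2))
          = integral {0..b} (\<lambda>x. (1/2) * ((?H k x)\<^sup>2 * wt lam x)) - integral {0..b} (\<lambda>x. (1 + (?A k x)\<^sup>2) * c + \<beta> * \<sigma>2)"
        using i1 i2 by (intro integral_diff integrable_add intg_cmul) auto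
      also have "integral {0..b} (\<lambda>x. (1 + (?A k x)\<^sup>2) * c + \<beta> * \<sigma>2) = c * (b + integral {0..b} (\<lambda>x. (?A k x)\<^sup>2)) + b * (\<beta> * \<sigma>2)"
      proof -
        have "integral {0..b} (\<lambda>x. (1 + (?A k x)\<^sup>2) * c + \<beta> * \<sigma>2)
            = integral {0..b} (\<lambda>x. (1 + (?A k x)\<^sup>2) * c) + integral {0..b} (\<lambda>x. \<beta> * \<sigma>2)"
          by (rule integral_add[OF i2]) auto
        then show ?thesis unfolding e2 using b by (simp add: algebra_simps)
      qed
      finally show "integral {0..b} (\<lambda>x. (1/2) * ((?H k x)\<^sup>2 * wt lam x) - ((1 + (?A k x)\<^sup>2) * c + \<beta> * \<sigma>2))
         = (1/2) * integral {0..b} (\<lambda>x. (?H k x)\<^sup>2 * wt lam x) - (c * (b + integral {0..b} (\<lambda>x. (?A k x)\<^sup>2)) + b * (\<beta> * \<sigma>2))"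
        by simp
    qed
    finally show ?thesis .
  qed
  have AAb: "\<And>k. k < N \<Longrightarrow> integral {0..b} (\<lambda>x. (?A k x)\<^sup>2) \<le> Abd"
    unfolding Abd_def P_def using G1_AA[OF Q1 b R] by blast
  have "(\<Sum>k<N. c * (b + integral {0..b} (\<lambda>x. (?A k x)\<^sup>2)) + b * (\<beta> * \<sigma>2))
      \<le> (\<Sum>k<N. c * (b + Abd) + b * (\<beta> * \<sigma>2))"
    using AAb c0 by (intro sum_mono) (auto intro: mult_left_mono)
  also have "\<dots> = real N * (c * (b + Abd) + b * (\<beta> * \<sigma>2))" by simp
  also have "\<dots> = K * Sw / lam"
    unfolding K_def c_def \<sigma>2_def using lam by (simp add: field_simps power3_eq_cube power2_eq_square)
  finally have "(\<Sum>k<N. c * (b + integral {0..b} (\<lambda>x. (?A k x)\<^sup>2)) + b * (\<beta> * \<sigma>2)) \<le> K * Sw / lam" .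
  moreover have "integral {0..b} ?g = Sw / 2 - (\<Sum>k<N. c * (b + integral {0..b} (\<lambda>x. (?A k x)\<^sup>2)) + b * (\<beta> * \<sigma>2))"
    unfolding gint Sw_def by (simp add: sum_subtractf sum_divide_distrib)
  ultimately have "Sw / 2 - K * Sw / lam \<le> Rm sl b N lam Q1 h" using low by linarith
  then show ?thesis unfolding Sw_def h_def by simp
qed



lemma Sw_ge:
  assumes b: "0 < b" and hv: "H2vec b N h" and lam: "0 \<le> lam"
  shows "exp (- 2 * lam * b) * (\<Sum>n<N. Gn b (h n)) \<le> (\<Sum>n<N. integral {0..b} (\<lambda>x. (d2 b (h n) x)\<^sup>2 * wt lam x))"
  unfolding sum_distrib_left
proof (rule sum_mono)
  fix n assume "n \<in> {..<N}"
  then have n: "n < N" by simp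
  have s: "sqi b (d2 b (h n))" using H2vec_facts(3)[OF hv b n] .
  have "exp (- 2 * lam * b) * Gn b (h n) = integral {0..b} (\<lambda>x. (d2 b (h n) x)\<^sup>2 * exp (- 2 * lam * b))"
    unfolding Gn_def by (simp add: mult.commute)
  also have "\<dots> \<le> integral {0..b} (\<lambda>x. (d2 b (h n) x)\<^sup>2 * wt lam x)"
  proof (rule integral_le)
    show "(\<lambda>x. (d2 b (h n) x)\<^sup>2 * exp (- 2 * lam * b)) integrable_on {0..b}"
      using intg_cmul[of "\<lambda>x. (d2 b (h n) x)\<^sup>2" "{0..b}" "exp (- 2 * lam * b)"] s unfolding sqi_def
      by (simp add: mult.commute)
    show "(\<lambda>x. (d2 b (h n) x)\<^sup>2 * wt lam x) integrable_on {0..b}" by (rule sqw_int[OF s])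
    fix x assume "x \<in> {0..b}"
    then show "(d2 b (h n) x)\<^sup>2 * exp (- 2 * lam * b) \<le> (d2 b (h n) x)\<^sup>2 * wt lam x"
      using wt_ge[OF lam, of x b] by (intro mult_left_mono) auto
  qed
  finally show "exp (- 2 * lam * b) * Gn b (h n) \<le> integral {0..b} (\<lambda>x. (d2 b (h n) x)\<^sup>2 * wt lam x)" .
qed

theorem theorem4:
  fixes sl b R :: real and N :: nat and Phi0 Psi0 Psib :: "nat \<Rightarrow> real"
  assumes "sl > 0" and "b > 0" and "N \<ge> 1" and "R > 0"
  shows "\<exists>lam2 > 1. \<exists>C3 > 0. \<forall>lam \<ge> lam2.
           \<forall>Q1 \<in> G1 b N R Phi0 Psi0 Psib. \<forall>Q2 \<in> G1 b N R Phi0 Psi0 Psib.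
             (\<exists>L. frechet_H0 b N (Jbar sl b N lam) Q1 L) \<and>
             (\<forall>L. frechet_H0 b N (Jbar sl b N lam) Q1 L \<longrightarrow>
                Jbar sl b N lam Q2 - Jbar sl b N lam Q1 - L (vdiff Q2 Q1)
                  \<ge> C3 * exp (- 2 * lam * b) * (H2norm b N (vdiff Q2 Q1))\<^sup>2)"
proof -
  have b: "0 < b" and R: "0 < R" using assms by auto
  define P where "P = (\<Sum>m<N. \<bar>Psi0 m\<bar>) + sqrt b * R"
  define Abd where "Abd = 2 * R\<^sup>2 + 2 * b * (Cf sl N * P\<^sup>2)\<^sup>2"
  define \<beta> where "\<beta> = ((2 + 2 * real N) * Cf sl N * P)\<^sup>2 * (real N)\<^sup>2"
  define K where "K = (real N * b * \<beta> + Cf sl N * (real N)^3 * (b + Abd)) / 2"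
  have Abd0: "0 \<le> Abd" unfolding Abd_def using b by simp
  have K0: "0 \<le> K" unfolding K_def \<beta>_def using b Abd0 Cf_nonneg[of sl N] by simp
  define lam2 where "lam2 = 4 * K + 2"
  define C3 where "C3 = 1 / (4 * (1 + b\<^sup>2 + b^4))"
  have Cp: "0 < 1 + b\<^sup>2 + b^4" using b by (simp add: add_pos_nonneg)
  have lam21: "1 < lam2" unfolding lam2_def using K0 by simp
  have C30: "0 < C3" unfolding C3_def using Cp by simp
  have "\<forall>lam \<ge> lam2.
           \<forall>Q1 \<in> G1 b N R Phi0 Psi0 Psib. \<forall>Q2 \<in> G1 b N R Phi0 Psi0 Psib.
             (\<exists>L. frechet_H0 b N (Jbar sl b N lam) Q1 L) \<and>
             (\<forall>L. frechet_H0 b N (Jbar sl b N lam) Q1 L \<longrightarrow>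
                Jbar sl b N lam Q2 - Jbar sl b N lam Q1 - L (vdiff Q2 Q1)
                  \<ge> C3 * exp (- 2 * lam * b) * (H2norm b N (vdiff Q2 Q1))\<^sup>2)"
  proof (intro allI impI ballI conjI)
    fix lam Q1 Q2 assume lam: "lam2 \<le> lam" and Q1: "Q1 \<in> G1 b N R Phi0 Psi0 Psib" and Q2: "Q2 \<in> G1 b N R Phi0 Psi0 Psib"
    have lp: "0 < lam" using lam K0 unfolding lam2_def by simp
    have v1: "H2vec b N Q1" using G1_H2vec[OF Q1] .
    define h where "h = vdiff Q2 Q1"
    have h0: "H0vec b N h" unfolding h_def using vdiff_H0(1)[OF Q1 Q2 b] .
    have hv: "H2vec b N h" using H0_H2[OF h0] .
    have fL: "frechet_H0 b N (Jbar sl b N lam) Q1 (Lm sl b N lam Q1)"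
      using frechet_Lm[OF b _ v1] lp by simp
    show "\<exists>L. frechet_H0 b N (Jbar sl b N lam) Q1 L" using fL by blast
    fix L assume L: "frechet_H0 b N (Jbar sl b N lam) Q1 L"
    have Lh: "L h = Lm sl b N lam Q1 h" by (rule frechet_unique[OF b L fL h0])
    define Sw where "Sw = (\<Sum>n<N. integral {0..b} (\<lambda>x. (d2 b (h n) x)\<^sup>2 * wt lam x))"
    have Sw0: "0 \<le> Sw" unfolding Sw_def by (intro sum_nonneg sqw_nonneg H2vec_facts(3)[OF hv b]) auto
    have eq: "Jbar sl b N lam Q2 - Jbar sl b N lam Q1 - L h = Rm sl b N lam Q1 h"
      using expand[OF b v1 hv, of sl lam] Lh unfolding h_def vadd_vdiff by simp
    have low: "Sw / 2 - K * Sw / lam \<le> Rm sl b N lam Q1 h"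
      using Rm_lower[OF b R Q1 Q2 lp P_def Abd_def \<beta>_def K_def] unfolding Sw_def h_def by simp
    have "K * Sw / lam \<le> Sw / 4"
    proof -
      have "K \<le> lam / 4" using lam unfolding lam2_def by simp
      then have "K * Sw \<le> lam / 4 * Sw" using Sw0 by (rule mult_right_mono)
      then show ?thesis using lp by (simp add: field_simps)
    qed
    then have r1: "Sw / 4 \<le> Rm sl b N lam Q1 h" using low by linarith
    have g: "(H2norm b N h)\<^sup>2 \<le> (1 + b\<^sup>2 + b^4) * (\<Sum>n<N. Gn b (h n))"
      using H2norm_le[OF hv b] h0 unfolding H0vec_def by blast
    have "exp (- 2 * lam * b) * (\<Sum>n<N. Gn b (h n)) \<le> Sw"
      unfolding Sw_def using Sw_ge[OF b hv] lp by simp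
    moreover have "C3 * exp (- 2 * lam * b) * (H2norm b N h)\<^sup>2 \<le> exp (- 2 * lam * b) * (\<Sum>n<N. Gn b (h n)) / 4"
    proof -
      have "C3 * exp (- 2 * lam * b) * (H2norm b N h)\<^sup>2 \<le> C3 * exp (- 2 * lam * b) * ((1 + b\<^sup>2 + b^4) * (\<Sum>n<N. Gn b (h n)))"
        using g Cp unfolding C3_def by (intro mult_left_mono) auto
      also have "\<dots> = exp (- 2 * lam * b) * (\<Sum>n<N. Gn b (h n)) / 4" unfolding C3_def using Cp by (simp add: field_simps)
      finally show ?thesis .
    qed
    ultimately have "C3 * exp (- 2 * lam * b) * (H2norm b N h)\<^sup>2 \<le> Sw / 4" by linarith
    then show "Jbar sl b N lam Q2 - Jbar sl b N lam Q1 - L (vdiff Q2 Q1)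
                  \<ge> C3 * exp (- 2 * lam * b) * (H2norm b N (vdiff Q2 Q1))\<^sup>2"
      using eq r1 unfolding h_def by linarith
  qed
  then show ?thesis using lam21 C30 by blast
qed


end
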